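(* Let $m\in\mathbb{Z}_{>0}$, let $V$ be an irreducible $\mathcal{G}^{(m,0)}$-module, and suppose there is an odd integer $k\ge m-1$ such that $L_{k+j}v=H_{k+j}v=I_{k+j}v=J_{k+j}v=0$ for all $v\in V$, $j\in\mathbb{Z}_{>0}$, and $I_{k-i}v=\alpha_{k-i}v$, $J_{k-i}v=\beta_{k-i}v$ for all $v\in V$, $0\le i\le m-1$, with $\alpha_{k-i},\beta_{k-i}\in\mathbb{C}$ and $\alpha_k\beta_k\neq0$. Let $V_0=\mathrm{Ind}_{\mathcal{G}^{(m,0)}}^{\mathcal{G}_0}V$, let $v\in V_0\setminus V$ (where $V$ is identified with $1\otimes V$) and let $\deg(v)=(\mathbf{h},\mathbf{l})$. Then: (1) If $\mathbf{h}\ne\mathbf{0}$ and $r=\min\{i:h_i\ne0\}$, then $\deg\big((I_{k-r}-\alpha_{k-r})v\big)=(\mathbf{h}-\epsilon_r,\mathbf{l})$. (2) If $\mathbf{h}=\mathbf{0}$, $\mathbf{l}\ne\mathbf{0}$ and $s=\max\{i:l_i\ne0\}$, then $\deg\big((I_{k-s}-\alpha_{k-s})v\big)=(\mathbf{0},\mathbf{l}-\epsilon_s)$ or $\deg\big((J_{k-s}-\beta_{k-s})v\big)=(\mathbf{0},\mathbf{l}-\epsilon_s)$.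
   Context: $\mathcal{G}$ is the complex Lie algebra with basis $\{L_n,H_n,I_n,J_n,\mathbf{c}_1,\mathbf{c}_2,\mathbf{c}_3: n\in\mathbb{Z}\}$ whose brackets of basis elements are $[L_m,L_n]=(n-m)L_{m+n}+\frac{m^3-m}{12}\delta_{m+n,0}\mathbf{c}_1$, $[L_m,H_n]=nH_{m+n}+m^2\delta_{m+n,0}\mathbf{c}_2$, $[H_m,H_n]=m\delta_{m+n,0}\mathbf{c}_3$, $[L_m,I_n]=(n-m)I_{m+n}$, $[L_m,J_n]=(n-m)J_{m+n}$, $[H_m,I_n]=I_{m+n}$, $[H_m,J_n]=-J_{m+n}$ (and antisymmetric counterparts), all other brackets of basis elements zero. $\mathcal{G}^{(m,0)}=\sum_{i\ge0}(\mathbb{C}L_{m+i}+\mathbb{C}H_{m+i}+\mathbb{C}I_{i}+\mathbb{C}J_{i})+\sum_{k=1}^3\mathbb{C}\mathbf{c}_k$, $\mathcal{G}_0=\sum_{i\ge0}(\mathbb{C}L_{i}+\mathbb{C}H_{i}+\mathbb{C}I_{i}+\mathbb{C}J_{i})+\sum_{k=1}^3\mathbb{C}\mathbf{c}_k$, and $V_0=\mathcal{U}(\mathcal{G}_0)\otimes_{\mathcal{U}(\mathcal{G}^{(m,0)})}V$. Orders and degree: elements of $\mathbb{N}^m$ are written $\mathbf{i}=(i_{m-1},\dots,i_1,i_0)$; $\epsilon_k$ has $1$ in the position of index $k$ and $0$ elsewhere; $\mathbf{w}(\mathbf{i})=\sum_{k=0}^{m-1}(m-k)i_k$. On $\mathbb{N}^m$,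 $\mathbf{i}\succ\mathbf{j}$ iff there is $k$ with $i_k>j_k$ and $i_s=j_s$ for all $s<k$. On $\mathbb{N}^m\times\mathbb{N}^m$, $(\mathbf{h},\mathbf{l})\succ(\mathbf{h}',\mathbf{l}')$ iff either $\mathbf{w}(\mathbf{h})+\mathbf{w}(\mathbf{l})>\mathbf{w}(\mathbf{h}')+\mathbf{w}(\mathbf{l}')$, or these weights are equal and $\mathbf{l}\succ\mathbf{l}'$, or the weights are equal, $\mathbf{l}=\mathbf{l}'$ and $\mathbf{h}\succ\mathbf{h}'$. Set $H^{\mathbf{h}}L^{\mathbf{l}}=H_{m-1}^{h_{m-1}}\cdots H_0^{h_0}L_{m-1}^{l_{m-1}}\cdots L_0^{l_0}$. By PBW every $v\in V_0$ is uniquely $\sum_{\mathbf{h},\mathbf{l}}H^{\mathbf{h}}L^{\mathbf{l}}v_{\mathbf{h},\mathbf{l}}$ with $v_{\mathbf{h},\mathbf{l}}\in V$, finitely many nonzero; for $v\neq0$, $\deg(v)$ is the $\succ$-maximal $(\mathbf{h},\mathbf{l})$ with $v_{\mathbf{h},\mathbf{l}}\ne0$. *)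

theory Defs
  imports Complex_Main
begin

datatype gb = Lb int | Hb int | Ib int | Jb int | C1 | C2 | C3

fun in_Gm0 :: "nat \<Rightarrow> gb \<Rightarrow> bool" where
  "in_Gm0 m (Lb n) = (n \<ge> int m)"
| "in_Gm0 m (Hb n) = (n \<ge> int m)"
| "in_Gm0 m (Ib n) = (n \<ge> 0)"
| "in_Gm0 m (Jb n) = (n \<ge> 0)"
| "in_Gm0 m _ = True"

fun in_G0 :: "gb \<Rightarrow> bool" where
  "in_G0 (Lb n) = (n \<ge> 0)"
| "in_G0 (Hb n) = (n \<ge> 0)"
| "in_G0 (Ib n) = (n \<ge> 0)"
| "in_G0 (Jb n) = (n \<ge> 0)"
| "in_G0 _ = True"

text \<open>Action of the bracket [x,y] of two basis elements on a vector, given the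
  action rho of basis elements and the scalar multiplication sc.\<close>
fun brk_act :: "(complex \<Rightarrow> 'v \<Rightarrow> 'v) \<Rightarrow> (gb \<Rightarrow> 'v \<Rightarrow> 'v) \<Rightarrow> gb \<Rightarrow> gb \<Rightarrow> 'v \<Rightarrow> 'v::ab_group_add" where
  "brk_act sc \<rho> (Lb a) (Lb b) v = sc (of_int (b - a)) (\<rho> (Lb (a + b)) v)
      + (if a + b = 0 then sc (of_int (a^3 - a) / 12) (\<rho> C1 v) else 0)"
| "brk_act sc \<rho> (Lb a) (Hb b) v = sc (of_int b) (\<rho> (Hb (a + b)) v)
      + (if a + b = 0 then sc (of_int (a^2)) (\<rho> C2 v) else 0)"
| "brk_act sc \<rho> (Hb b) (Lb a) v = - (sc (of_int b) (\<rho> (Hb (a + b)) v)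
      + (if a + b = 0 then sc (of_int (a^2)) (\<rho> C2 v) else 0))"
| "brk_act sc \<rho> (Hb a) (Hb b) v = (if a + b = 0 then sc (of_int a) (\<rho> C3 v) else 0)"
| "brk_act sc \<rho> (Lb a) (Ib b) v = sc (of_int (b - a)) (\<rho> (Ib (a + b)) v)"
| "brk_act sc \<rho> (Ib b) (Lb a) v = - sc (of_int (b - a)) (\<rho> (Ib (a + b)) v)"
| "brk_act sc \<rho> (Lb a) (Jb b) v = sc (of_int (b - a)) (\<rho> (Jb (a + b)) v)"
| "brk_act sc \<rho> (Jb b) (Lb a) v = - sc (of_int (b - a)) (\<rho> (Jb (a + b)) v)"
| "brk_act sc \<rho> (Hb a) (Ib b) v = \<rho> (Ib (a + b)) v"
| "brk_act sc \<rho> (Ib b) (Hb a) v = - \<rho> (Ib (a + b)) v"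
| "brk_act sc \<rho> (Hb a) (Jb b) v = - \<rho> (Jb (a + b)) v"
| "brk_act sc \<rho> (Jb b) (Hb a) v = \<rho> (Jb (a + b)) v"
| "brk_act sc \<rho> x y v = 0"

text \<open>rho is a representation (module structure) of the subalgebra spanned by the
  basis elements satisfying S, on the complex vector space with scalar multiplication sc.\<close>
definition is_rep :: "(complex \<Rightarrow> 'v::ab_group_add \<Rightarrow> 'v) \<Rightarrow> (gb \<Rightarrow> bool) \<Rightarrow> (gb \<Rightarrow> 'v \<Rightarrow> 'v) \<Rightarrow> bool" where
  "is_rep sc S \<rho> \<longleftrightarrow> vector_space sc
     \<and> (\<forall>x. S x \<longrightarrow> Vector_Spaces.linear sc sc (\<rho> x))
     \<and> (\<forall>x y v. S x \<and> S y \<longrightarrow> \<rho> x (\<rho> y v) - \<rho> y (\<rho> x v) = brk_act sc \<rho> x y v)"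

definition irreducible_rep :: "(complex \<Rightarrow> 'v::ab_group_add \<Rightarrow> 'v) \<Rightarrow> (gb \<Rightarrow> bool) \<Rightarrow> (gb \<Rightarrow> 'v \<Rightarrow> 'v) \<Rightarrow> bool" where
  "irreducible_rep sc S \<rho> \<longleftrightarrow> is_rep sc S \<rho> \<and> (\<exists>u::'v. u \<noteq> 0)
     \<and> (\<forall>U. module.subspace sc U \<and> (\<forall>x u. S x \<and> u \<in> U \<longrightarrow> \<rho> x u \<in> U)
            \<longrightarrow> U = {0} \<or> U = UNIV)"

text \<open>N^m, realised as functions nat => nat vanishing from index m on;
  i = (i_{m-1},...,i_0) corresponds to the function k |-> i_k.\<close>
definition NM :: "nat \<Rightarrow> (nat \<Rightarrow> nat) set" where
  "NM m = {f. \<forall>i\<ge>m. f i = 0}"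

fun monH :: "(gb \<Rightarrow> 'w \<Rightarrow> 'w) \<Rightarrow> nat \<Rightarrow> (nat \<Rightarrow> nat) \<Rightarrow> 'w \<Rightarrow> 'w" where
  "monH \<sigma> 0 h = id"
| "monH \<sigma> (Suc n) h = (\<sigma> (Hb (int n)) ^^ h n) \<circ> monH \<sigma> n h"

fun monL :: "(gb \<Rightarrow> 'w \<Rightarrow> 'w) \<Rightarrow> nat \<Rightarrow> (nat \<Rightarrow> nat) \<Rightarrow> 'w \<Rightarrow> 'w" where
  "monL \<sigma> 0 l = id"
| "monL \<sigma> (Suc n) l = (\<sigma> (Lb (int n)) ^^ l n) \<circ> monL \<sigma> n l"

definition mon :: "(gb \<Rightarrow> 'w \<Rightarrow> 'w) \<Rightarrow> nat \<Rightarrow> (nat \<Rightarrow> nat) \<Rightarrow> (nat \<Rightarrow> nat) \<Rightarrow> 'w \<Rightarrow> 'w" where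
  "mon \<sigma> m h l = monH \<sigma> m h \<circ> monL \<sigma> m l"

definition pbw_sum :: "(gb \<Rightarrow> 'w \<Rightarrow> 'w) \<Rightarrow> ('v \<Rightarrow> 'w) \<Rightarrow> nat
    \<Rightarrow> ((nat \<Rightarrow> nat) \<times> (nat \<Rightarrow> nat) \<Rightarrow> 'v::zero) \<Rightarrow> 'w::comm_monoid_add" where
  "pbw_sum \<sigma> \<iota> m c = (\<Sum>p\<in>{p. c p \<noteq> 0}. mon \<sigma> m (fst p) (snd p) (\<iota> (c p)))"

definition pbw_family :: "nat \<Rightarrow> ((nat \<Rightarrow> nat) \<times> (nat \<Rightarrow> nat) \<Rightarrow> 'v::zero) \<Rightarrow> bool" where
  "pbw_family m c \<longleftrightarrow> finite {p. c p \<noteq> 0} \<and> {p. c p \<noteq> 0} \<subseteq> NM m \<times> NM m"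

definition pbw_basis :: "(gb \<Rightarrow> 'w \<Rightarrow> 'w) \<Rightarrow> ('v::zero \<Rightarrow> 'w::comm_monoid_add) \<Rightarrow> nat \<Rightarrow> bool" where
  "pbw_basis \<sigma> \<iota> m \<longleftrightarrow> (\<forall>w. \<exists>!c. pbw_family m c \<and> w = pbw_sum \<sigma> \<iota> m c)"

definition pbw_coeff :: "(gb \<Rightarrow> 'w \<Rightarrow> 'w) \<Rightarrow> ('v::zero \<Rightarrow> 'w::comm_monoid_add) \<Rightarrow> nat \<Rightarrow> 'w
    \<Rightarrow> (nat \<Rightarrow> nat) \<times> (nat \<Rightarrow> nat) \<Rightarrow> 'v" where
  "pbw_coeff \<sigma> \<iota> m w = (THE c. pbw_family m c \<and> w = pbw_sum \<sigma> \<iota> m c)"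

text \<open>(W, sigma, iota) is the induced module Ind_{G^(m,0)}^{G_0} V = U(G_0) (x) V, with
  iota : V -> V_0, v |-> 1 (x) v: W is a G_0-module, iota is a G^(m,0)-module map, and
  the PBW map (finitely supported families) -> W is bijective.\<close>
definition induced_module :: "nat \<Rightarrow> (complex \<Rightarrow> 'v \<Rightarrow> 'v) \<Rightarrow> (gb \<Rightarrow> 'v \<Rightarrow> 'v)
    \<Rightarrow> (complex \<Rightarrow> 'w \<Rightarrow> 'w) \<Rightarrow> (gb \<Rightarrow> 'w \<Rightarrow> 'w) \<Rightarrow> ('v::ab_group_add \<Rightarrow> 'w::ab_group_add) \<Rightarrow> bool" where
  "induced_module m sV \<rho> sW \<sigma> \<iota> \<longleftrightarrow> is_rep sW in_G0 \<sigma>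
     \<and> Vector_Spaces.linear sV sW \<iota>
     \<and> (\<forall>x u. in_Gm0 m x \<longrightarrow> \<iota> (\<rho> x u) = \<sigma> x (\<iota> u))
     \<and> pbw_basis \<sigma> \<iota> m"

definition wt :: "nat \<Rightarrow> (nat \<Rightarrow> nat) \<Rightarrow> nat" where
  "wt m i = (\<Sum>k<m. (m - k) * i k)"

definition lexgt :: "nat \<Rightarrow> (nat \<Rightarrow> nat) \<Rightarrow> (nat \<Rightarrow> nat) \<Rightarrow> bool" where
  "lexgt m i j \<longleftrightarrow> (\<exists>k<m. i k > j k \<and> (\<forall>s<k. i s = j s))"

definition pairgt :: "nat \<Rightarrow> (nat \<Rightarrow> nat) \<times> (nat \<Rightarrow> nat) \<Rightarrow> (nat \<Rightarrow> nat) \<times> (nat \<Rightarrow> nat) \<Rightarrow> bool" where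
  "pairgt m p q \<longleftrightarrow>
     wt m (fst p) + wt m (snd p) > wt m (fst q) + wt m (snd q)
   \<or> (wt m (fst p) + wt m (snd p) = wt m (fst q) + wt m (snd q) \<and> lexgt m (snd p) (snd q))
   \<or> (wt m (fst p) + wt m (snd p) = wt m (fst q) + wt m (snd q) \<and> snd p = snd q
        \<and> lexgt m (fst p) (fst q))"

definition has_deg :: "(gb \<Rightarrow> 'w \<Rightarrow> 'w) \<Rightarrow> ('v::zero \<Rightarrow> 'w::comm_monoid_add) \<Rightarrow> nat \<Rightarrow> 'w
    \<Rightarrow> (nat \<Rightarrow> nat) \<times> (nat \<Rightarrow> nat) \<Rightarrow> bool" where
  "has_deg \<sigma> \<iota> m w p \<longleftrightarrow> pbw_coeff \<sigma> \<iota> m w p \<noteq> 0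
     \<and> (\<forall>q. pbw_coeff \<sigma> \<iota> m w q \<noteq> 0 \<longrightarrow> q \<noteq> p \<longrightarrow> pairgt m p q)"

end

theory Submission
  imports Defs "HOL-Library.Sublist"
begin

fun idx :: "gb \<Rightarrow> int" where
  "idx (Hb i) = i" | "idx (Lb i) = i" | "idx _ = 0"

definition good :: "nat \<Rightarrow> gb \<Rightarrow> bool" where
  "good m x \<longleftrightarrow> (\<exists>i. 0 \<le> i \<and> i < int m \<and> (x = Hb i \<or> x = Lb i))"

definition gw :: "nat \<Rightarrow> gb list \<Rightarrow> bool" where
  "gw m ws \<longleftrightarrow> (\<forall>x\<in>set ws. good m x)"

definition wtw :: "nat \<Rightarrow> gb list \<Rightarrow> int" where
  "wtw m ws = sum_list (map (\<lambda>x. int m - idx x) ws)"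

fun wB :: "(int \<Rightarrow> gb) \<Rightarrow> nat \<Rightarrow> (nat \<Rightarrow> nat) \<Rightarrow> gb list" where
  "wB C 0 f = []"
| "wB C (Suc n) f = replicate (f n) (C (int n)) @ wB C n f"

definition word :: "nat \<Rightarrow> (nat \<Rightarrow> nat) \<times> (nat \<Rightarrow> nat) \<Rightarrow> gb list" where
  "word m p = wB Hb m (fst p) @ wB Lb m (snd p)"

lemma gw_Cons[simp]: "gw m (x#xs) \<longleftrightarrow> good m x \<and> gw m xs"
  by (auto simp: gw_def)
lemma gw_Nil[simp]: "gw m []" by (simp add: gw_def)
lemma gw_append[simp]: "gw m (xs @ ys) \<longleftrightarrow> gw m xs \<and> gw m ys"
  by (auto simp: gw_def)
lemma wtw_Cons[simp]: "wtw m (x#xs) = (int m - idx x) + wtw m xs"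
  by (simp add: wtw_def)
lemma wtw_Nil[simp]: "wtw m [] = 0" by (simp add: wtw_def)

lemma wtw_append[simp]: "wtw m (xs @ ys) = wtw m xs + wtw m ys"
  by (simp add: wtw_def)

lemma subseq_set: "subseq xs ys \<Longrightarrow> set xs \<subseteq> set ys"
  by (induction rule: list_emb.induct) auto

lemma gw_subseq: "subseq ws ws' \<Longrightarrow> gw m ws' \<Longrightarrow> gw m ws"
  unfolding gw_def using subseq_set by blast

lemma wB_cong: "(\<And>i. i < n \<Longrightarrow> f i = g i) \<Longrightarrow> wB C n f = wB C n g"
  by (induction n) auto

lemma gw_replicate[simp]: "gw m (replicate a x) \<longleftrightarrow> a = 0 \<or> good m x"
  by (auto simp: gw_def)

lemma gw_wBH: "n \<le> m \<Longrightarrow> gw m (wB Hb n f)"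
  by (induction n) (auto simp: good_def)
lemma gw_wBL: "n \<le> m \<Longrightarrow> gw m (wB Lb n f)"
  by (induction n) (auto simp: good_def)
lemma gw_word: "gw m (word m p)"
  by (simp add: word_def gw_wBH gw_wBL)

lemma subseq_replicate: "subseq ws (replicate a x) \<Longrightarrow> ws = replicate (length ws) x"
proof -
  assume a: "subseq ws (replicate a x)"
  have "\<forall>y\<in>set ws. y = x"
    using subseq_set[OF a] by auto
  then show ?thesis by (simp add: replicate_length_same)
qed

lemma subseq_wB: "subseq ws (wB C n f) \<Longrightarrow> \<exists>g. ws = wB C n g \<and> (\<forall>i\<ge>n. g i = 0)"
proof (induction n arbitrary: ws)
  case 0 then have "ws = []" by simp
  then show ?case by (intro exI[of _ "\<lambda>_. 0"]) simp
next
  case (Suc n)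
  from Suc.prems have "subseq ws (replicate (f n) (C (int n)) @ wB C n f)" by simp
  then obtain ws1 ws2 where ws: "ws = ws1 @ ws2" "subseq ws1 (replicate (f n) (C (int n)))"
    "subseq ws2 (wB C n f)" by (rule subseq_appendE)
  from Suc.IH[OF ws(3)] obtain g where g: "ws2 = wB C n g" "\<forall>i\<ge>n. g i = 0" by auto
  define g' where "g' = g(n := length ws1)"
  have "wB C n g' = wB C n g" by (rule wB_cong) (simp add: g'_def)
  obtain a where a: "ws1 = replicate a (C (int n))" "a = length ws1"
    using subseq_replicate[OF ws(2)] by blast
  have "ws = wB C (Suc n) g'" using ws(1) g(1) \<open>wB C n g' = wB C n g\<close> a(1)
    by (simp add: g'_def a(2)[symmetric])
  moreover have "\<forall>i\<ge>Suc n. g' i = 0" using g by (simp add: g'_def)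
  ultimately show ?case by blast
qed

lemma subseq_word: "subseq ws (word m p) \<Longrightarrow> \<exists>p'. p' \<in> NM m \<times> NM m \<and> ws = word m p'"
proof -
  assume "subseq ws (word m p)"
  then have "subseq ws (wB Hb m (fst p) @ wB Lb m (snd p))" by (simp add: word_def)
  then obtain ws1 ws2 where ws: "ws = ws1 @ ws2" "subseq ws1 (wB Hb m (fst p))" "subseq ws2 (wB Lb m (snd p))"
    by (rule subseq_appendE)
  obtain g1 where "ws1 = wB Hb m g1" "\<forall>i\<ge>m. g1 i = 0" using subseq_wB[OF ws(2)] by auto
  moreover obtain g2 where "ws2 = wB Lb m g2" "\<forall>i\<ge>m. g2 i = 0" using subseq_wB[OF ws(3)] by auto
  ultimately show ?thesis using ws by (intro exI[of _ "(g1,g2)"]) (auto simp: NM_def word_def)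
qed

lemma wtw_wB: "(\<And>i. idx (C i) = i) \<Longrightarrow> wtw m (wB C n f) = (\<Sum>k<n. (int m - int k) * int (f k))"
proof (induction n)
  case 0 then show ?case by simp
next
  case (Suc n)
  have r: "wtw m (replicate a x) = (int m - idx x) * int a" for a x
    by (induction a) (simp_all add: algebra_simps)
  have "wtw m (wB C (Suc n) f) = (int m - int n) * int (f n) + wtw m (wB C n f)"
    using Suc.prems by (simp add: r)
  then show ?case using Suc.IH[OF Suc.prems] by (simp only: sum.lessThan_Suc)
qed

lemma wt_int: "int (wt m f) = (\<Sum>k<m. (int m - int k) * int (f k))"
  unfolding wt_def of_nat_sum
proof (intro sum.cong refl)
  fix x assume "x \<in> {..<m}"
  then show "int ((m - x) * f x) = (int m - int x) * int (f x)" by (simp add: of_nat_diff)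
qed

lemma wtw_word: "wtw m (word m p) = int (wt m (fst p)) + int (wt m (snd p))"
  by (simp add: word_def wt_int wtw_wB)


definition linW :: "(complex \<Rightarrow> 'w::ab_group_add \<Rightarrow> 'w) \<Rightarrow> ('w \<Rightarrow> 'w) \<Rightarrow> bool" where
  "linW s f \<longleftrightarrow> (\<forall>a b. f (a + b) = f a + f b) \<and> (\<forall>c a. f (s c a) = s c (f a))"

locale LS =
  fixes m :: nat and k :: int
    and sV :: "complex \<Rightarrow> 'v::ab_group_add \<Rightarrow> 'v" and \<rho> :: "gb \<Rightarrow> 'v \<Rightarrow> 'v"
    and sW :: "complex \<Rightarrow> 'w::ab_group_add \<Rightarrow> 'w" and \<sigma> :: "gb \<Rightarrow> 'w \<Rightarrow> 'w"
    and \<iota> :: "'v \<Rightarrow> 'w"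
  assumes m_pos: "m > 0" and k_ge: "k \<ge> int m - 1"
    and vsV: "vector_space sV" and vsW: "vector_space sW"
    and lin\<iota>: "Vector_Spaces.linear sV sW \<iota>"
    and lin\<sigma>: "\<And>x. in_G0 x \<Longrightarrow> Vector_Spaces.linear sW sW (\<sigma> x)"
    and comm: "\<And>x y w. in_G0 x \<Longrightarrow> in_G0 y \<Longrightarrow> \<sigma> x (\<sigma> y w) - \<sigma> y (\<sigma> x w) = brk_act sW \<sigma> x y w"
    and compat: "\<And>x u. in_Gm0 m x \<Longrightarrow> \<iota> (\<rho> x u) = \<sigma> x (\<iota> u)"
    and pbw: "pbw_basis \<sigma> \<iota> m"

sublocale LS \<subseteq> V: vector_space sV by (rule vsV)
sublocale LS \<subseteq> W: vector_space sW by (rule vsW)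

context LS
begin

definition ev :: "gb list \<Rightarrow> 'v \<Rightarrow> 'w" where
  "ev ws u = foldr \<sigma> ws (\<iota> u)"

lemma ev_Nil[simp]: "ev [] u = \<iota> u" by (simp add: ev_def)
lemma ev_Cons[simp]: "ev (x#xs) u = \<sigma> x (ev xs u)" by (simp add: ev_def)
lemma ev_append: "ev (xs @ ys) u = foldr \<sigma> xs (ev ys u)" by (simp add: ev_def)

lemma linW_zero: "linW sW f \<Longrightarrow> f 0 = 0"
  unfolding linW_def by (metis W.scale_zero_left)
lemma linW_add: "linW sW f \<Longrightarrow> f (a + b) = f a + f b"
  unfolding linW_def by blast
lemma linW_scale: "linW sW f \<Longrightarrow> f (sW c a) = sW c (f a)"
  unfolding linW_def by blast
lemma linW_minus: "linW sW f \<Longrightarrow> f (- a) = - f a"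
  unfolding linW_def by (metis W.scale_minus_left W.scale_one)
lemma linW_diff: "linW sW f \<Longrightarrow> f (a - b) = f a - f b"
  by (metis diff_conv_add_uminus linW_add linW_minus)
lemma linW_sum: "linW sW f \<Longrightarrow> f (sum g A) = (\<Sum>a\<in>A. f (g a))"
  by (induction A rule: infinite_finite_induct) (simp_all add: linW_zero linW_add)
lemma linW_sum_list: "linW sW f \<Longrightarrow> f (sum_list xs) = sum_list (map f xs)"
  by (induction xs) (simp_all add: linW_zero linW_add)

lemma linW_of_linear: "Vector_Spaces.linear sW sW f \<Longrightarrow> linW sW f"
  unfolding linW_def by (simp add: module_hom_iff_linear[symmetric] module_hom_iff)

lemma lin\<iota>_add: "\<iota> (a + b) = \<iota> a + \<iota> b"
  and lin\<iota>_scale: "\<iota> (sV c a) = sW c (\<iota> a)"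
  using lin\<iota> by (simp_all add: module_hom_iff_linear[symmetric] module_hom_iff)
lemma lin\<iota>_zero: "\<iota> 0 = 0"
  by (metis V.scale_zero_left W.scale_zero_left lin\<iota>_scale)

lemma good_G0: "good m x \<Longrightarrow> in_G0 x"
  unfolding good_def by auto

lemma linW_\<sigma>: "in_G0 x \<Longrightarrow> linW sW (\<sigma> x)"
  by (rule linW_of_linear[OF lin\<sigma>])

lemma linW_fold: "gw m ws \<Longrightarrow> linW sW (foldr \<sigma> ws)"
proof (induction ws)
  case Nil then show ?case by (simp add: linW_def)
next
  case (Cons x xs)
  then have "linW sW (\<sigma> x)" "linW sW (foldr \<sigma> xs)" by (auto intro: linW_\<sigma> good_G0)
  then show ?case unfolding linW_def by simp
qed

lemma ev_add: "gw m ws \<Longrightarrow> ev ws (a + b) = ev ws a + ev ws b"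
  by (simp add: ev_def lin\<iota>_add linW_add[OF linW_fold])
lemma ev_scale: "gw m ws \<Longrightarrow> ev ws (sV c a) = sW c (ev ws a)"
  by (simp add: ev_def lin\<iota>_scale linW_scale[OF linW_fold])
lemma ev_zero: "gw m ws \<Longrightarrow> ev ws 0 = 0"
  by (simp add: ev_def lin\<iota>_zero linW_zero[OF linW_fold])
lemma ev_minus: "gw m ws \<Longrightarrow> ev ws (- a) = - ev ws a"
  by (metis V.scale_minus_left V.scale_one W.scale_minus_left W.scale_one ev_scale)

definition Sp :: "gb list \<Rightarrow> int \<Rightarrow> 'w set" where
  "Sp ws d = {sum_list (map (\<lambda>(ws', u). ev ws' u) L) | L.
      \<forall>q\<in>set L. subseq (fst q) ws \<and> wtw m (fst q) \<le> d}"

lemma Sp_zero: "0 \<in> Sp ws d"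
  unfolding Sp_def by (rule CollectI, rule exI[of _ "[]"]) simp

lemma Sp_add: "a \<in> Sp ws d \<Longrightarrow> b \<in> Sp ws d \<Longrightarrow> a + b \<in> Sp ws d"
  unfolding Sp_def
proof (clarify)
  fix L1 L2 :: "(gb list \<times> 'v) list"
  assume "\<forall>q\<in>set L1. subseq (fst q) ws \<and> wtw m (fst q) \<le> d"
    "\<forall>q\<in>set L2. subseq (fst q) ws \<and> wtw m (fst q) \<le> d"
  then show "\<exists>L. sum_list (map (\<lambda>(ws', u). ev ws' u) L1) + sum_list (map (\<lambda>(ws', u). ev ws' u) L2) =
      sum_list (map (\<lambda>(ws', u). ev ws' u) L) \<and> (\<forall>q\<in>set L. subseq (fst q) ws \<and> wtw m (fst q) \<le> d)"
    by (intro exI[of _ "L1 @ L2"]) auto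
qed

lemma Sp_single: "subseq ws' ws \<Longrightarrow> wtw m ws' \<le> d \<Longrightarrow> ev ws' u \<in> Sp ws d"
  unfolding Sp_def by (rule CollectI, rule exI[of _ "[(ws', u)]"]) simp

lemma Sp_mono: "a \<in> Sp ws d \<Longrightarrow> d \<le> d' \<Longrightarrow> a \<in> Sp ws d'"
  unfolding Sp_def by fastforce

lemma Sp_mono_ws: "a \<in> Sp ws d \<Longrightarrow> subseq ws ws2 \<Longrightarrow> a \<in> Sp ws2 d"
  unfolding Sp_def using subseq_order.trans by fastforce

lemma Sp_scale: assumes "gw m ws" "a \<in> Sp ws d" shows "sW c a \<in> Sp ws d"
proof -
  obtain L where L: "a = sum_list (map (\<lambda>(ws', u). ev ws' u) L)"
    "\<forall>q\<in>set L. subseq (fst q) ws \<and> wtw m (fst q) \<le> d"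
    using assms(2) unfolding Sp_def by blast
  have "sW c a = sum_list (map (\<lambda>(ws', u). ev ws' u) (map (\<lambda>(ws',u). (ws', sV c u)) L))"
    using L(2) unfolding L(1)
  proof (induction L)
    case (Cons q L)
    have "gw m (fst q)" using Cons.prems assms(1) gw_subseq by auto
    then show ?case using Cons by (auto simp: W.scale_right_distrib ev_scale split: prod.splits)
  qed simp
  then show ?thesis unfolding Sp_def using L(2) by fastforce
qed

lemma Sp_minus: "gw m ws \<Longrightarrow> a \<in> Sp ws d \<Longrightarrow> - a \<in> Sp ws d"
  by (metis Sp_scale W.scale_minus_left W.scale_one)

lemma Sp_diff: "gw m ws \<Longrightarrow> a \<in> Sp ws d \<Longrightarrow> b \<in> Sp ws d \<Longrightarrow> a - b \<in> Sp ws d"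
  by (metis Sp_add Sp_minus diff_conv_add_uminus)

lemma Sp_cons: assumes "good m x" "gw m ws" "a \<in> Sp ws d"
  shows "\<sigma> x a \<in> Sp (x#ws) (d + (int m - idx x))"
proof -
  obtain L where L: "a = sum_list (map (\<lambda>(ws', u). ev ws' u) L)"
    "\<forall>q\<in>set L. subseq (fst q) ws \<and> wtw m (fst q) \<le> d"
    using assms(3) unfolding Sp_def by blast
  have lx: "linW sW (\<sigma> x)" using assms(1) by (intro linW_\<sigma> good_G0)
  have "\<sigma> x a = sum_list (map (\<lambda>(ws', u). ev ws' u) (map (\<lambda>(ws',u). (x#ws', u)) L))"
    unfolding L(1) by (induction L) (auto simp: linW_zero[OF lx] linW_add[OF lx])
  moreover have "\<forall>q\<in>set (map (\<lambda>(ws',u). (x#ws', u)) L). subseq (fst q) (x#ws) \<and> wtw m (fst q) \<le> d + (int m - idx x)"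
    using L(2) by auto
  ultimately show ?thesis unfolding Sp_def by blast
qed

abbreviation cf :: "'w \<Rightarrow> (nat \<Rightarrow> nat) \<times> (nat \<Rightarrow> nat) \<Rightarrow> 'v" where
  "cf w \<equiv> pbw_coeff \<sigma> \<iota> m w"


lemma monH_fold: "monH \<sigma> n h w = foldr \<sigma> (wB Hb n h) w"
  by (induction n arbitrary: w) simp_all
lemma monL_fold: "monL \<sigma> n h w = foldr \<sigma> (wB Lb n h) w"
  by (induction n arbitrary: w) simp_all

lemma mon_ev: "mon \<sigma> m (fst p) (snd p) (\<iota> u) = ev (word m p) u"
  by (simp add: mon_def monH_fold monL_fold word_def ev_def)

lemma ps_super: assumes "finite F" "{p. c p \<noteq> 0} \<subseteq> F"
  shows "pbw_sum \<sigma> \<iota> m c = (\<Sum>p\<in>F. ev (word m p) (c p))"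
  unfolding pbw_sum_def mon_ev
  by (rule sum.mono_neutral_left) (use assms in \<open>auto simp: ev_zero gw_word\<close>)

lemma coeff_spec: "pbw_family m (cf w) \<and> w = pbw_sum \<sigma> \<iota> m (cf w)"
proof -
  have "\<exists>!c. pbw_family m c \<and> w = pbw_sum \<sigma> \<iota> m c" using pbw unfolding pbw_basis_def by blast
  then show ?thesis unfolding pbw_coeff_def by (rule theI')
qed

lemma coeff_of: assumes "pbw_family m c" shows "cf (pbw_sum \<sigma> \<iota> m c) = c"
proof -
  have "\<exists>!c'. pbw_family m c' \<and> pbw_sum \<sigma> \<iota> m c = pbw_sum \<sigma> \<iota> m c'"
    using pbw unfolding pbw_basis_def by blast
  then show ?thesis unfolding pbw_coeff_def by (rule the1_equality) (simp add: assms)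
qed

lemma fam_finite: "pbw_family m c \<Longrightarrow> finite {p. c p \<noteq> 0}"
  by (simp add: pbw_family_def)

lemma coeff_add: "cf (a + b) = (\<lambda>q. cf a q + cf b q)"
proof -
  obtain ca where fa: "pbw_family m ca" and ea: "a = pbw_sum \<sigma> \<iota> m ca" using coeff_spec by blast
  obtain cb where fb: "pbw_family m cb" and eb: "b = pbw_sum \<sigma> \<iota> m cb" using coeff_spec by blast
  have ca: "cf a = ca" using coeff_of[OF fa] ea by simp
  have cb: "cf b = cb" using coeff_of[OF fb] eb by simp
  let ?F = "{p. ca p \<noteq> 0} \<union> {p. cb p \<noteq> 0}"
  have fin: "finite ?F" using fa fb by (simp add: pbw_family_def)
  have sub: "{p. ca p + cb p \<noteq> 0} \<subseteq> ?F" by auto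
  have "?F \<subseteq> NM m \<times> NM m" using fa fb unfolding pbw_family_def by blast
  then have fam: "pbw_family m (\<lambda>q. ca q + cb q)"
    using sub fin unfolding pbw_family_def using finite_subset by blast
  have a1: "a = (\<Sum>p\<in>?F. ev (word m p) (ca p))" unfolding ea by (rule ps_super[OF fin]) blast
  have b1: "b = (\<Sum>p\<in>?F. ev (word m p) (cb p))" unfolding eb by (rule ps_super[OF fin]) blast
  have "a + b = (\<Sum>p\<in>?F. ev (word m p) (ca p + cb p))"
    unfolding a1 b1 by (simp add: sum.distrib ev_add gw_word)
  also have "\<dots> = pbw_sum \<sigma> \<iota> m (\<lambda>q. ca q + cb q)"
    by (rule ps_super[symmetric, OF fin]) auto
  finally show ?thesis using coeff_of[OF fam] ca cb by simp
qed

lemma coeff_scale: "cf (sW c a) = (\<lambda>q. sV c (cf a q))"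
proof -
  obtain ca where fa: "pbw_family m ca" and ea: "a = pbw_sum \<sigma> \<iota> m ca" using coeff_spec by blast
  have ca: "cf a = ca" using coeff_of[OF fa] ea by simp
  let ?F = "{p. ca p \<noteq> 0}"
  have fin: "finite ?F" using fa by (simp add: pbw_family_def)
  have sub: "{p. sV c (ca p) \<noteq> 0} \<subseteq> ?F" by auto
  have "?F \<subseteq> NM m \<times> NM m" using fa unfolding pbw_family_def by blast
  then have fam: "pbw_family m (\<lambda>q. sV c (ca q))"
    using sub fin unfolding pbw_family_def using finite_subset by blast
  have a1: "a = (\<Sum>p\<in>?F. ev (word m p) (ca p))" unfolding ea by (rule ps_super[OF fin]) blast
  have "sW c a = (\<Sum>p\<in>?F. ev (word m p) (sV c (ca p)))"
    unfolding a1 by (simp add: W.scale_sum_right ev_scale gw_word)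
  also have "\<dots> = pbw_sum \<sigma> \<iota> m (\<lambda>q. sV c (ca q))"
    by (rule ps_super[symmetric, OF fin]) auto
  finally show ?thesis using coeff_of[OF fam] ca by simp
qed

lemma coeff_zero: "cf 0 = (\<lambda>q. 0)"
proof -
  have fam: "pbw_family m (\<lambda>q. 0::'v)" by (simp add: pbw_family_def)
  have "pbw_sum \<sigma> \<iota> m (\<lambda>q. 0::'v) = 0" by (simp add: pbw_sum_def)
  then show ?thesis using coeff_of[OF fam] by simp
qed

lemma coeff_minus: "cf (- a) = (\<lambda>q. - cf a q)"
  using coeff_scale[of "-1" a] by simp

lemma coeff_diff: "cf (a - b) = (\<lambda>q. cf a q - cf b q)"
  unfolding diff_conv_add_uminus coeff_add coeff_minus by (rule refl)

lemma coeff_sum: "cf (\<Sum>a\<in>A. f a) q = (\<Sum>a\<in>A. cf (f a) q)"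
  by (induction A rule: infinite_finite_induct) (simp_all add: coeff_zero coeff_add)

lemma coeff_mon: assumes "p \<in> NM m \<times> NM m"
  shows "cf (ev (word m p) u) = (\<lambda>q. if q = p then u else 0)"
proof -
  have sub: "{q. (if q = p then u else 0) \<noteq> 0} \<subseteq> {p}" by auto
  have fin: "finite {q. (if q = p then u else 0) \<noteq> 0}" by (rule finite_subset[OF sub]) simp
  have "{q. (if q = p then u else 0) \<noteq> 0} \<subseteq> NM m \<times> NM m" using sub assms by blast
  then have fam: "pbw_family m (\<lambda>q. if q = p then u else 0)"
    using fin unfolding pbw_family_def by blast
  have "pbw_sum \<sigma> \<iota> m (\<lambda>q. if q = p then u else 0) = (\<Sum>q\<in>{p}. ev (word m q) (if q = p then u else 0))"
    by (rule ps_super) auto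
  then show ?thesis using coeff_of[OF fam] by simp
qed

lemma Sp_coeff: assumes "w \<in> Sp (word m p) d" "cf w q \<noteq> 0"
  shows "int (wt m (fst q)) + int (wt m (snd q)) \<le> d"
proof -
  obtain L where L: "w = sum_list (map (\<lambda>(ws', u). ev ws' u) L)"
    "\<forall>q\<in>set L. subseq (fst q) (word m p) \<and> wtw m (fst q) \<le> d"
    using assms(1) unfolding Sp_def by blast
  show ?thesis using L(2) assms(2) unfolding L(1)
  proof (induction L)
    case Nil then show ?case by (simp add: coeff_zero)
  next
    case (Cons a L)
    obtain ws' u where a: "a = (ws', u)" by (cases a)
    have "subseq ws' (word m p)" using Cons.prems(1) a by simp
    then obtain p' where p': "p' \<in> NM m \<times> NM m" "ws' = word m p'"
      using subseq_word by blast
    have c: "cf (ev ws' u) q + cf (sum_list (map (\<lambda>(ws', u). ev ws' u) L)) q \<noteq> 0"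
      using Cons.prems(2) a by (simp add: coeff_add)
    show ?case
    proof (cases "cf (ev ws' u) q = 0")
      case True
      then show ?thesis using c Cons by auto
    next
      case False
      then have "q = p'" using coeff_mon[OF p'(1)] p'(2) by (auto split: if_splits)
      then show ?thesis using Cons.prems(1) a p' wtw_word[of m p'] by auto
    qed
  qed
qed

end


locale GX = LS m k sV \<rho> sW \<sigma> \<iota>
  for m k and sV :: "complex \<Rightarrow> 'v::ab_group_add \<Rightarrow> 'v" and \<rho>
    and sW :: "complex \<Rightarrow> 'w::ab_group_add \<Rightarrow> 'w" and \<sigma> and \<iota> +
  fixes X :: "int \<Rightarrow> gb" and eps :: complex and \<gamma> :: "int \<Rightarrow> complex"
  assumes X_G0: "\<And>b. 0 \<le> b \<Longrightarrow> in_G0 (X b)"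
    and X_Gm0: "\<And>b. 0 \<le> b \<Longrightarrow> in_Gm0 m (X b)"
    and X_H: "\<And>i b w. brk_act sW \<sigma> (Hb i) (X b) w = sW eps (\<sigma> (X (i + b)) w)"
    and X_L: "\<And>i b w. brk_act sW \<sigma> (Lb i) (X b) w = sW (of_int (b - i)) (\<sigma> (X (i + b)) w)"
    and X_van: "\<And>b u. k < b \<Longrightarrow> \<rho> (X b) u = 0"
    and X_eig: "\<And>r u. r < m \<Longrightarrow> \<rho> (X (k - int r)) u = sV (\<gamma> (k - int r)) u"
begin

definition cfx :: "gb \<Rightarrow> int \<Rightarrow> complex" where
  "cfx x b = (case x of Hb i \<Rightarrow> eps | Lb i \<Rightarrow> of_int (b - i) | _ \<Rightarrow> 0)"

lemma good_idx: "good m x \<Longrightarrow> 0 \<le> idx x \<and> idx x < int m"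
  unfolding good_def by auto

lemma comm_X: assumes "good m x" "0 \<le> b"
  shows "\<sigma> (X b) (\<sigma> x w) = \<sigma> x (\<sigma> (X b) w) - sW (cfx x b) (\<sigma> (X (idx x + b)) w)"
proof -
  have c: "\<sigma> x (\<sigma> (X b) w) - \<sigma> (X b) (\<sigma> x w) = brk_act sW \<sigma> x (X b) w"
    using comm[OF good_G0[OF assms(1)] X_G0[OF assms(2)]] .
  from assms(1) obtain i where "x = Hb i \<or> x = Lb i" unfolding good_def by blast
  then have "brk_act sW \<sigma> x (X b) w = sW (cfx x b) (\<sigma> (X (idx x + b)) w)"
    by (auto simp: X_H X_L cfx_def)
  with c show ?thesis by (simp add: algebra_simps)
qed

lemma K: "gw m ws \<Longrightarrow> k < b \<Longrightarrow> \<sigma> (X b) (ev ws u) = 0"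
proof (induction ws arbitrary: b)
  case Nil
  then have "0 \<le> b" using k_ge by linarith
  then have "\<sigma> (X b) (\<iota> u) = \<iota> (\<rho> (X b) u)" using compat X_Gm0 by metis
  then show ?case using X_van[OF Nil(2)] by (simp add: lin\<iota>_zero)
next
  case (Cons x xs)
  have g: "good m x" "gw m xs" using Cons.prems by auto
  have b0: "0 \<le> b" using Cons.prems k_ge by linarith
  have "k < idx x + b" using good_idx[OF g(1)] Cons.prems by linarith
  then have "\<sigma> (X (idx x + b)) (ev xs u) = 0" using Cons.IH g(2) by blast
  moreover have "\<sigma> (X b) (ev xs u) = 0" using Cons.IH g(2) Cons.prems by blast
  ultimately show ?case using comm_X[OF g(1) b0]
    by (simp add: linW_zero[OF linW_\<sigma>[OF good_G0[OF g(1)]]])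
qed

fun Ds :: "nat \<Rightarrow> gb list \<Rightarrow> 'v \<Rightarrow> 'w" where
  "Ds r [] u = 0"
| "Ds r (x#xs) u = \<sigma> x (Ds r xs u) + (if idx x = int r then sW (cfx x (k - int r)) (ev xs u) else 0)"

lemma Ds_Sp: "gw m ws \<Longrightarrow> Ds r ws u \<in> Sp ws (wtw m ws - (int m - int r))"
proof (induction ws)
  case Nil then show ?case by (simp add: Sp_zero)
next
  case (Cons x xs)
  have g: "good m x" "gw m xs" using Cons.prems by auto
  have a: "\<sigma> x (Ds r xs u) \<in> Sp (x#xs) (wtw m (x#xs) - (int m - int r))"
    using Sp_cons[OF g Cons.IH[OF g(2)]] by (simp add: algebra_simps)
  have b: "(if idx x = int r then sW (cfx x (k - int r)) (ev xs u) else 0) \<in> Sp (x#xs) (wtw m (x#xs) - (int m - int r))"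
  proof (cases "idx x = int r")
    case True
    have "ev xs u \<in> Sp (x#xs) (wtw m (x#xs) - (int m - int r))"
      by (rule Sp_single) (use True in auto)
    then show ?thesis using True Sp_scale[of "x#xs"] g by simp
  qed (simp add: Sp_zero)
  show ?case using Sp_add[OF a b] by simp
qed

lemma E: "gw m ws \<Longrightarrow> r < m \<Longrightarrow>
  \<sigma> (X (k - int r)) (ev ws u) - sW (\<gamma> (k - int r)) (ev ws u) + sW (\<gamma> k) (Ds r ws u)
    \<in> Sp ws (wtw m ws - (int m - int r) - 1)"
proof (induction ws arbitrary: r)
  case Nil
  have b0: "0 \<le> k - int r" using Nil k_ge by linarith
  have "\<sigma> (X (k - int r)) (\<iota> u) = \<iota> (\<rho> (X (k - int r)) u)" using compat X_Gm0[OF b0] by metis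
  also have "\<dots> = sW (\<gamma> (k - int r)) (\<iota> u)" using X_eig[OF Nil(2)] lin\<iota>_scale by simp
  finally show ?case by (simp add: Sp_zero)
next
  case (Cons x xs)
  have g: "good m x" "gw m xs" using Cons.prems by auto
  define b where "b = k - int r"
  define w where "w = ev xs u"
  define i where "i = idx x"
  have b0: "0 \<le> b" using Cons.prems k_ge unfolding b_def by linarith
  have i0: "0 \<le> i" "i < int m" using good_idx[OF g(1)] unfolding i_def by auto
  have lx: "linW sW (\<sigma> x)" using linW_\<sigma>[OF good_G0[OF g(1)]] .
  define A where "A = \<sigma> (X b) w - sW (\<gamma> b) w + sW (\<gamma> k) (Ds r xs u)"
  have A: "A \<in> Sp xs (wtw m xs - (int m - int r) - 1)"
    using Cons.IH[OF g(2) Cons.prems(2)] unfolding A_def b_def w_def .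
  have A2: "\<sigma> x A \<in> Sp (x#xs) (wtw m (x#xs) - (int m - int r) - 1)"
    using Sp_cons[OF g A] unfolding i_def by (simp add: algebra_simps)
  define Z where "Z = - sW (cfx x b) (\<sigma> (X (i + b)) w) + (if i = int r then sW (\<gamma> k) (sW (cfx x b) w) else 0)"
  have c: "\<sigma> (X b) (\<sigma> x w) = \<sigma> x (\<sigma> (X b) w) - sW (cfx x b) (\<sigma> (X (i + b)) w)"
    using comm_X[OF g(1) b0] unfolding i_def .
  have e1: "ev (x#xs) u = \<sigma> x w" by (simp add: w_def)
  have e2: "Ds r (x#xs) u = \<sigma> x (Ds r xs u) + (if i = int r then sW (cfx x b) w else 0)"
    by (simp add: w_def i_def b_def)
  have eq: "\<sigma> (X b) (ev (x#xs) u) - sW (\<gamma> b) (ev (x#xs) u) + sW (\<gamma> k) (Ds r (x#xs) u) = \<sigma> x A + Z"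
    unfolding A_def Z_def e1 e2 c
    by (simp add: linW_add[OF lx] linW_diff[OF lx] linW_scale[OF lx] W.scale_right_distrib)
  have Z: "Z \<in> Sp (x#xs) (wtw m (x#xs) - (int m - int r) - 1)"
  proof (cases "i > int r")
    case True
    then have "k < i + b" unfolding b_def by linarith
    then have "\<sigma> (X (i + b)) w = 0" using K g(2) unfolding w_def by blast
    then have "Z = 0" using True unfolding Z_def by simp
    then show ?thesis by (simp add: Sp_zero)
  next
    case False
    show ?thesis
    proof (cases "i = int r")
      case True
      have ib: "i + b = k - int 0" unfolding b_def using True by simp
      define B where "B = \<sigma> (X (k - int 0)) w - sW (\<gamma> (k - int 0)) w + sW (\<gamma> k) (Ds 0 xs u)"
      have B: "B \<in> Sp xs (wtw m xs - (int m - int 0) - 1)"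
        unfolding B_def w_def by (rule Cons.IH[OF g(2)]) (use m_pos in simp)
      have D0: "Ds 0 xs u \<in> Sp xs (wtw m xs - (int m - int 0))" by (rule Ds_Sp[OF g(2)])
      have "Z = - sW (cfx x b) (B - sW (\<gamma> k) (Ds 0 xs u))"
        unfolding Z_def B_def ib using True
        by (simp add: W.scale_right_diff_distrib W.scale_right_distrib mult.commute)
      moreover have "B - sW (\<gamma> k) (Ds 0 xs u) \<in> Sp xs (wtw m xs - int m)"
        using Sp_diff[OF g(2) Sp_mono[OF B] Sp_scale[OF g(2) D0]] by simp
      ultimately have "Z \<in> Sp xs (wtw m xs - int m)"
        using Sp_minus[OF g(2)] Sp_scale[OF g(2)] by simp
      then have "Z \<in> Sp (x#xs) (wtw m xs - int m)"
        by (rule Sp_mono_ws) auto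
      then show ?thesis
        by (rule Sp_mono) (use True m_pos in \<open>simp add: i_def\<close>)
    next
      case False2: False
      then have lt: "i < int r" using False by simp
      define r' where "r' = r - nat i"
      have r': "r' < m" "i + b = k - int r'" using lt i0 Cons.prems(2) unfolding r'_def b_def by auto
      define C where "C = \<sigma> (X (k - int r')) w - sW (\<gamma> (k - int r')) w + sW (\<gamma> k) (Ds r' xs u)"
      have C: "C \<in> Sp xs (wtw m xs - (int m - int r') - 1)"
        unfolding C_def w_def by (rule Cons.IH[OF g(2) r'(1)])
      have D': "Ds r' xs u \<in> Sp xs (wtw m xs - (int m - int r'))" by (rule Ds_Sp[OF g(2)])
      have ew: "w \<in> Sp xs (wtw m xs)" unfolding w_def by (rule Sp_single) auto
      have "\<sigma> (X (i + b)) w = C + sW (\<gamma> (k - int r')) w - sW (\<gamma> k) (Ds r' xs u)"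
        unfolding C_def r'(2) by simp
      moreover have "C + sW (\<gamma> (k - int r')) w - sW (\<gamma> k) (Ds r' xs u) \<in> Sp xs (wtw m xs)"
        using r'(1)
        by (intro Sp_diff[OF g(2)] Sp_add Sp_scale[OF g(2)] ew Sp_mono[OF C] Sp_mono[OF D']) auto
      ultimately have "\<sigma> (X (i + b)) w \<in> Sp xs (wtw m xs)" by simp
      then have "Z \<in> Sp xs (wtw m xs)"
        unfolding Z_def using lt by (simp add: Sp_minus[OF g(2)] Sp_scale[OF g(2)])
      then have "Z \<in> Sp (x#xs) (wtw m xs)"
        by (rule Sp_mono_ws) auto
      then show ?thesis
        by (rule Sp_mono) (use lt in \<open>simp add: i_def\<close>)
    qed
  qed
  show ?case using Sp_add[OF A2 Z] eq unfolding b_def by simp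
qed

end


lemma wt_upd: assumes "r < m"
  shows "wt m (f(r := a)) + (m - r) * f r = wt m f + (m - r) * a"
proof -
  have "wt m f = (m - r) * f r + (\<Sum>k\<in>{..<m} - {r}. (m - k) * f k)"
    unfolding wt_def using assms by (subst sum.remove[of _ r]) auto
  moreover have "wt m (f(r := a)) = (m - r) * a + (\<Sum>k\<in>{..<m} - {r}. (m - k) * f k)"
    unfolding wt_def using assms by (subst sum.remove[of _ r]) auto
  ultimately show ?thesis by simp
qed

lemma wt_dec: assumes "r < m" "1 \<le> f r"
  shows "wt m f = wt m (f(r := f r - 1)) + (m - r)"
proof -
  have "wt m (f(r := f r - 1)) + (m - r) * f r = wt m f + (m - r) * (f r - 1)"
    by (rule wt_upd[OF assms(1)])
  moreover have "(m - r) * f r = (m - r) * (f r - 1) + (m - r)" using assms(2)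
    by (metis add.commute le_add_diff_inverse mult.right_neutral distrib_left)
  ultimately show ?thesis by simp
qed

lemma lexgt_asym: assumes "lexgt m a b" shows "\<not> lexgt m b a"
proof
  assume "lexgt m b a"
  then obtain t2 where t2: "t2 < m" "a t2 < b t2" "\<forall>s<t2. b s = a s" unfolding lexgt_def by blast
  from assms obtain t1 where t1: "t1 < m" "b t1 < a t1" "\<forall>s<t1. a s = b s" unfolding lexgt_def by blast
  show False
  proof (cases t1 t2 rule: linorder_cases)
    case less then show ?thesis using t1 t2 by auto
  next
    case equal then show ?thesis using t1 t2 by auto
  next
    case greater then show ?thesis using t1 t2 by auto
  qed
qed

lemma lexgt_irrefl: "\<not> lexgt m a a"
  using lexgt_asym by blast

lemma lexgt_dec2: assumes "lexgt m a b" "1 \<le> a r" "1 \<le> b r"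
  shows "lexgt m (a(r := a r - 1)) (b(r := b r - 1))"
proof -
  from assms(1) obtain t where t: "t < m" "b t < a t" "\<forall>s<t. a s = b s" unfolding lexgt_def by blast
  show ?thesis unfolding lexgt_def
    by (rule exI[of _ t]) (use t assms(2,3) in auto)
qed

lemma lexgt_self_dec: assumes "r < m" "1 \<le> b r" shows "lexgt m b (b(r := b r - 1))"
  unfolding lexgt_def by (rule exI[of _ r]) (use assms in auto)

lemma lexgt_dec_right: assumes "lexgt m a b" "1 \<le> b r" "r < m"
  shows "lexgt m a (b(r := b r - 1))"
proof -
  from assms(1) obtain t where t: "t < m" "b t < a t" "\<forall>s<t. a s = b s" unfolding lexgt_def by blast
  show ?thesis
  proof (cases "r < t")
    case True
    then show ?thesis unfolding lexgt_def
      by (intro exI[of _ r]) (use t assms in auto)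
  next
    case False
    then show ?thesis unfolding lexgt_def
      by (intro exI[of _ t]) (use t assms in auto)
  qed
qed

lemma not_lexgt_inc: assumes "r < m" shows "\<not> lexgt m l (l(r := l r + 1))"
proof -
  have "lexgt m (l(r := l r + 1)) l" unfolding lexgt_def
    by (rule exI[of _ r]) (use assms in auto)
  then show ?thesis using lexgt_asym by blast
qed

lemma wt0: assumes "f \<in> NM m" "wt m f = 0" shows "f = (\<lambda>_. 0)"
proof
  fix i
  show "f i = 0"
  proof (cases "i < m")
    case True
    have "(m - i) * f i \<le> wt m f" unfolding wt_def
      using True by (intro member_le_sum) auto
    then show ?thesis using assms True by simp
  next
    case False then show ?thesis using assms by (simp add: NM_def)
  qed
qed

lemma wt_ge: assumes "r < m" "1 \<le> f r" shows "m - r \<le> wt m f"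
  using wt_dec[of r m f] assms by simp

lemma wt_strict: assumes "\<forall>j<m. a j \<le> b j" "\<exists>j<m. a j < b j" shows "wt m a < wt m b"
  unfolding wt_def
proof (rule sum_strict_mono_ex1)
  show "\<forall>x\<in>{..<m}. (m - x) * a x \<le> (m - x) * b x" using assms(1) by auto
  from assms(2) obtain j where "j < m" "a j < b j" by blast
  then show "\<exists>x\<in>{..<m}. (m - x) * a x < (m - x) * b x" by (intro bexI[of _ j]) auto
qed simp

lemma part2_order:
  assumes l: "l \<in> NM m" and l': "l' \<in> NM m" and h': "h' \<in> NM m"
    and s: "s = Max {i. l i \<noteq> 0}" and lnz: "l \<noteq> (\<lambda>_. 0)"
    and gt: "lexgt m l l'" and hs: "1 \<le> h' s" and w: "wt m h' + wt m l' = wt m l"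
    and ne: "l' \<noteq> l(s := l s - 1)"
  shows "lexgt m (l(s := l s - 1)) l'"
proof -
  have sub: "{i. l i \<noteq> 0} \<subseteq> {..<m}"
  proof
    fix i assume "i \<in> {i. l i \<noteq> 0}"
    then have "l i \<noteq> 0" by simp
    moreover have "\<forall>i\<ge>m. l i = 0" using l by (simp add: NM_def)
    ultimately have "\<not> m \<le> i" by auto
    then show "i \<in> {..<m}" by simp
  qed
  have fin: "finite {i. l i \<noteq> 0}" using finite_subset[OF sub] by simp
  have sm: "s < m" "l s \<noteq> 0"
  proof -
    obtain i where "l i \<noteq> 0" using lnz by auto
    then have ne: "{i. l i \<noteq> 0} \<noteq> {}" by auto
    have "s \<in> {i. l i \<noteq> 0}" unfolding s using Max_in[OF fin ne] .
    then show "s < m" "l s \<noteq> 0" using sub by auto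
  qed
  have above: "l j = 0" if "s < j" for j
  proof (rule ccontr)
    assume "l j \<noteq> 0"
    then have "j \<le> s" unfolding s by (intro Max_ge[OF fin]) simp
    then show False using that by simp
  qed
  from gt obtain t where t: "t < m" "l' t < l t" "\<forall>j<t. l j = l' j" unfolding lexgt_def by blast
  have ts: "t \<le> s"
  proof (rule ccontr)
    assume "\<not> t \<le> s"
    then have "l t = 0" using above by simp
    then show False using t(2) by simp
  qed
  show ?thesis
  proof (cases "t < s")
    case True
    then show ?thesis unfolding lexgt_def by (intro exI[of _ t]) (use t in auto)
  next
    case False
    then have ts': "t = s" using ts by simp
    show ?thesis
    proof (cases "l' s < l s - 1")
      case True
      then show ?thesis unfolding lexgt_def by (intro exI[of _ s]) (use t ts' sm in auto)
    next
      case False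
      then have eqs: "l' s = l s - 1" using t(2) ts' by simp
      define L0 where "L0 = l(s := l s - 1)"
      have le: "\<forall>j<m. L0 j \<le> l' j"
      proof (intro allI impI)
        fix j assume "j < m"
        show "L0 j \<le> l' j"
        proof (cases j s rule: linorder_cases)
          case less then show ?thesis using t(3) ts' by (simp add: L0_def)
        next
          case equal then show ?thesis using eqs by (simp add: L0_def)
        next
          case greater then show ?thesis using above by (simp add: L0_def)
        qed
      qed
      have "\<exists>j<m. L0 j < l' j"
      proof (rule ccontr)
        assume "\<not> (\<exists>j<m. L0 j < l' j)"
        then have "\<forall>j<m. L0 j = l' j" using le by (simp add: order.order_iff_strict)
        moreover have "\<forall>j\<ge>m. L0 j = l' j" using l l' sm unfolding NM_def L0_def by auto
        ultimately have "L0 = l'" by (intro ext) (metis not_le)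
        then show False using ne L0_def by simp
      qed
      then have "wt m L0 < wt m l'" using wt_strict le by blast
      moreover have "wt m l = wt m L0 + (m - s)" unfolding L0_def
        by (rule wt_dec) (use sm in auto)
      moreover have "m - s \<le> wt m h'" by (rule wt_ge) (use sm hs in auto)
      ultimately show ?thesis using w by linarith
    qed
  qed
qed

lemma part2_eq:
  assumes h': "h' \<in> NM m" and sm: "s < m" and ls: "1 \<le> l s"
    and hs: "1 \<le> h' s" and w: "wt m h' + wt m (l(s := l s - 1)) = wt m l"
  shows "h'(s := h' s - 1) = (\<lambda>_. 0)"
proof -
  have "wt m l = wt m (l(s := l s - 1)) + (m - s)" using wt_dec[of s m l] sm ls by simp
  moreover have "wt m h' = wt m (h'(s := h' s - 1)) + (m - s)" using wt_dec[of s m h'] sm hs by simp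
  ultimately have "wt m (h'(s := h' s - 1)) = 0" using w by linarith
  moreover have "h'(s := h' s - 1) \<in> NM m" using h' sm unfolding NM_def by auto
  ultimately show ?thesis using wt0 by blast
qed


context GX
begin

lemma linW_pow: "good m x \<Longrightarrow> linW sW (\<sigma> x ^^ a)"
  using linW_fold[of "replicate a x"] by simp

lemma ev_rep: "ev (replicate a x @ rest) u = (\<sigma> x ^^ a) (ev rest u)"
  by (simp add: ev_append)

lemma Ds_rep: assumes "good m x" "gw m rest"
  shows "Ds r (replicate a x @ rest) u = (\<sigma> x ^^ a) (Ds r rest u)
     + (if idx x = int r then sW (of_nat a * cfx x (k - int r)) (ev (replicate (a - 1) x @ rest) u) else 0)"
proof (induction a)
  case 0 then show ?case by simp
next
  case (Suc a)
  have lx: "linW sW (\<sigma> x)" using linW_\<sigma>[OF good_G0[OF assms(1)]] .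
  have "Ds r (replicate (Suc a) x @ rest) u = \<sigma> x (Ds r (replicate a x @ rest) u)
     + (if idx x = int r then sW (cfx x (k - int r)) (ev (replicate a x @ rest) u) else 0)" by simp
  also have "\<dots> = (\<sigma> x ^^ Suc a) (Ds r rest u)
     + (if idx x = int r then sW (of_nat a * cfx x (k - int r)) (\<sigma> x (ev (replicate (a - 1) x @ rest) u))
          + sW (cfx x (k - int r)) (ev (replicate a x @ rest) u) else 0)"
    unfolding Suc by (simp add: linW_add[OF lx] linW_scale[OF lx] linW_zero[OF lx])
  also have "\<dots> = (\<sigma> x ^^ Suc a) (Ds r rest u)
     + (if idx x = int r then sW (of_nat (Suc a) * cfx x (k - int r)) (ev (replicate (Suc a - 1) x @ rest) u) else 0)"
  proof (cases a)
    case 0 then show ?thesis by simp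
  next
    case (Suc a')
    have "\<sigma> x (ev (replicate (a - 1) x @ rest) u) = ev (replicate a x @ rest) u"
      using Suc by simp
    then show ?thesis by (simp add: W.scale_left_distrib algebra_simps)
  qed
  finally show ?case .
qed

lemma gw_wBC: assumes "\<And>i. 0 \<le> i \<Longrightarrow> i < int m \<Longrightarrow> good m (C i)" "n \<le> m"
  shows "gw m (wB C n f)"
  using assms(2) by (induction n) (auto intro: assms(1))

lemma Ds_wB: assumes C: "\<And>i. idx (C i) = i" "\<And>i. 0 \<le> i \<Longrightarrow> i < int m \<Longrightarrow> good m (C i)"
    and n: "n \<le> m" and ts: "gw m ts"
  shows "Ds r (wB C n f @ ts) u = foldr \<sigma> (wB C n f) (Ds r ts u)
    + (if r < n then sW (of_nat (f r) * cfx (C (int r)) (k - int r)) (ev (wB C n (f(r := f r - 1)) @ ts) u) else 0)"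
  using n
proof (induction n)
  case 0 then show ?case by simp
next
  case (Suc n)
  define x where "x = C (int n)"
  have gx: "good m x" unfolding x_def using Suc.prems by (intro C(2)) auto
  have ix: "idx x = int n" unfolding x_def using C(1) by simp
  have grest: "gw m (wB C n f @ ts)" using gw_wBC[OF C(2)] Suc.prems ts by auto
  define P where "P = \<sigma> x ^^ f n"
  have lP: "linW sW P" unfolding P_def by (rule linW_pow[OF gx])
  have IH: "Ds r (wB C n f @ ts) u = foldr \<sigma> (wB C n f) (Ds r ts u)
    + (if r < n then sW (of_nat (f r) * cfx (C (int r)) (k - int r)) (ev (wB C n (f(r := f r - 1)) @ ts) u) else 0)"
    using Suc by simp
  have "Ds r (wB C (Suc n) f @ ts) u = Ds r (replicate (f n) x @ (wB C n f @ ts)) u"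
    by (simp add: x_def)
  also have "\<dots> = P (Ds r (wB C n f @ ts) u)
     + (if n = r then sW (of_nat (f n) * cfx x (k - int r)) (ev (replicate (f n - 1) x @ (wB C n f @ ts)) u) else 0)"
    unfolding P_def using Ds_rep[OF gx grest, of r "f n" u] ix by simp
  also have "\<dots> = P (foldr \<sigma> (wB C n f) (Ds r ts u))
    + (if r < n then sW (of_nat (f r) * cfx (C (int r)) (k - int r)) (P (ev (wB C n (f(r := f r - 1)) @ ts) u)) else 0)
    + (if n = r then sW (of_nat (f n) * cfx x (k - int r)) (ev (replicate (f n - 1) x @ (wB C n f @ ts)) u) else 0)"
    unfolding IH by (simp add: linW_add[OF lP] linW_scale[OF lP] linW_zero[OF lP])
  also have "\<dots> = foldr \<sigma> (wB C (Suc n) f) (Ds r ts u)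
    + (if r < Suc n then sW (of_nat (f r) * cfx (C (int r)) (k - int r)) (ev (wB C (Suc n) (f(r := f r - 1)) @ ts) u) else 0)"
  proof -
    have a: "P (foldr \<sigma> (wB C n f) (Ds r ts u)) = foldr \<sigma> (wB C (Suc n) f) (Ds r ts u)"
      by (simp add: P_def x_def)
    show ?thesis
    proof (cases r n rule: linorder_cases)
      case less
      have "P (ev (wB C n (f(r := f r - 1)) @ ts) u) = ev (wB C (Suc n) (f(r := f r - 1)) @ ts) u"
        using less by (simp add: P_def x_def ev_append)
      then show ?thesis using a less by simp
    next
      case equal
      have "wB C n (f(n := f n - 1)) = wB C n f" by (rule wB_cong) simp
      then have "ev (replicate (f n - 1) x @ (wB C n f @ ts)) u = ev (wB C (Suc n) (f(r := f r - 1)) @ ts) u"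
        using equal by (simp add: x_def)
      then show ?thesis using a equal by (simp add: x_def)
    next
      case greater
      then show ?thesis using a by simp
    qed
  qed
  finally show ?case .
qed

lemma Ds_word: assumes "r < m"
  shows "Ds r (word m (h, l)) u = sW (of_nat (h r) * eps) (ev (word m (h(r := h r - 1), l)) u)
     + sW (of_nat (l r) * of_int (k - 2 * int r)) (ev (word m (h, l(r := l r - 1))) u)"
proof -
  have CH: "\<And>i. idx (Hb i) = i" "\<And>i. 0 \<le> i \<Longrightarrow> i < int m \<Longrightarrow> good m (Hb i)"
    by (auto simp: good_def)
  have CL: "\<And>i. idx (Lb i) = i" "\<And>i. 0 \<le> i \<Longrightarrow> i < int m \<Longrightarrow> good m (Lb i)"
    by (auto simp: good_def)
  have gL: "gw m (wB Lb m l)" by (rule gw_wBL) simp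
  have gH: "gw m (wB Hb m h)" by (rule gw_wBH) simp
  have L: "Ds r (wB Lb m l @ []) u = sW (of_nat (l r) * of_int (k - 2 * int r)) (ev (wB Lb m (l(r := l r - 1))) u)"
    using Ds_wB[OF CL order_refl gw_Nil, of r l u] assms
    by (simp add: linW_zero[OF linW_fold[OF gL]] cfx_def)
  have "Ds r (word m (h, l)) u = Ds r (wB Hb m h @ wB Lb m l) u" by (simp add: word_def)
  also have "\<dots> = foldr \<sigma> (wB Hb m h) (Ds r (wB Lb m l) u)
       + sW (of_nat (h r) * eps) (ev (wB Hb m (h(r := h r - 1)) @ wB Lb m l) u)"
    using Ds_wB[OF CH order_refl gL, of r h u] assms by (simp add: cfx_def)
  also have "\<dots> = sW (of_nat (l r) * of_int (k - 2 * int r)) (ev (wB Hb m h @ wB Lb m (l(r := l r - 1))) u)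
       + sW (of_nat (h r) * eps) (ev (wB Hb m (h(r := h r - 1)) @ wB Lb m l) u)"
    using L by (simp add: linW_scale[OF linW_fold[OF gH]] ev_append)
  finally show ?thesis by (simp add: word_def add.commute)
qed

end


definition pH :: "nat \<Rightarrow> (nat \<Rightarrow> nat) \<times> (nat \<Rightarrow> nat) \<Rightarrow> (nat \<Rightarrow> nat) \<times> (nat \<Rightarrow> nat)" where
  "pH r p = ((fst p)(r := fst p r - 1), snd p)"
definition pL :: "nat \<Rightarrow> (nat \<Rightarrow> nat) \<times> (nat \<Rightarrow> nat) \<Rightarrow> (nat \<Rightarrow> nat) \<times> (nat \<Rightarrow> nat)" where
  "pL r p = (fst p, (snd p)(r := snd p r - 1))"

lemma NM_upd: "f \<in> NM m \<Longrightarrow> r < m \<Longrightarrow> f(r := a) \<in> NM m"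
  unfolding NM_def by auto

definition wp :: "nat \<Rightarrow> (nat \<Rightarrow> nat) \<times> (nat \<Rightarrow> nat) \<Rightarrow> nat" where
  "wp m p = wt m (fst p) + wt m (snd p)"

lemma pairgt_wp: "pairgt m a b \<Longrightarrow> wp m b \<le> wp m a"
  unfolding pairgt_def wp_def by auto

lemma pairgt_eq: "pairgt m a b \<Longrightarrow> wp m b = wp m a \<Longrightarrow>
    lexgt m (snd a) (snd b) \<or> (snd a = snd b \<and> lexgt m (fst a) (fst b))"
  unfolding pairgt_def wp_def by auto

lemma pairgtI1: "wp m b < wp m a \<Longrightarrow> pairgt m a b"
  unfolding pairgt_def wp_def by auto
lemma pairgtI2: "wp m b = wp m a \<Longrightarrow> lexgt m (snd a) (snd b) \<Longrightarrow> pairgt m a b"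
  unfolding pairgt_def wp_def by auto
lemma pairgtI3: "wp m b = wp m a \<Longrightarrow> snd a = snd b \<Longrightarrow> lexgt m (fst a) (fst b) \<Longrightarrow> pairgt m a b"
  unfolding pairgt_def wp_def by auto

context GX
begin

lemma deg_facts: assumes "has_deg \<sigma> \<iota> m v p0"
  shows "finite {p. cf v p \<noteq> 0}" "{p. cf v p \<noteq> 0} \<subseteq> NM m \<times> NM m" "cf v p0 \<noteq> 0"
    "\<And>p. cf v p \<noteq> 0 \<Longrightarrow> p \<noteq> p0 \<Longrightarrow> pairgt m p0 p"
  using assms coeff_spec[of v] unfolding has_deg_def pbw_family_def by auto

definition Tr :: "nat \<Rightarrow> 'w \<Rightarrow> 'w" where
  "Tr r w = \<sigma> (X (k - int r)) w - sW (\<gamma> (k - int r)) w"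

definition Rr :: "nat \<Rightarrow> 'w \<Rightarrow> (nat \<Rightarrow> nat) \<times> (nat \<Rightarrow> nat) \<Rightarrow> 'w" where
  "Rr r v p = Tr r (ev (word m p) (cf v p)) + sW (\<gamma> k) (Ds r (word m p) (cf v p))"

lemma Tr_lin: assumes "r < m" shows "linW sW (Tr r)"
proof -
  have "0 \<le> k - int r" using assms k_ge by linarith
  then have l: "linW sW (\<sigma> (X (k - int r)))" by (intro linW_\<sigma> X_G0)
  show ?thesis unfolding linW_def Tr_def
    by (simp add: linW_add[OF l] linW_scale[OF l] W.scale_right_distrib W.scale_right_diff_distrib mult.commute)
qed

lemma Rr_Sp: assumes "r < m"
  shows "Rr r v p \<in> Sp (word m p) (int (wt m (fst p)) + int (wt m (snd p)) - (int m - int r) - 1)"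
  using E[OF gw_word assms, of p "cf v p"] unfolding Rr_def Tr_def wtw_word .

lemma Tcoeff: assumes r: "r < m"
  shows "cf (Tr r v) q = (\<Sum>p\<in>{p. cf v p \<noteq> 0}. cf (Rr r v p) q
      - sV (\<gamma> k) (sV (of_nat (fst p r) * eps) (if q = pH r p then cf v p else 0)
          + sV (of_nat (snd p r) * of_int (k - 2 * int r)) (if q = pL r p then cf v p else 0)))"
proof -
  obtain c where fc: "pbw_family m c" and ev: "v = pbw_sum \<sigma> \<iota> m c" using coeff_spec by blast
  have cv: "cf v = c" using coeff_of[OF fc] ev by simp
  let ?S = "{p. c p \<noteq> 0}"
  have fin: "finite ?S" and SNM: "?S \<subseteq> NM m \<times> NM m" using fc by (auto simp: pbw_family_def)
  have v: "v = (\<Sum>p\<in>?S. ev (word m p) (c p))" unfolding ev by (rule ps_super[OF fin]) simp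
  have T: "Tr r v = (\<Sum>p\<in>?S. Tr r (ev (word m p) (c p)))"
    unfolding v by (rule linW_sum[OF Tr_lin[OF r]])
  have each: "cf (Tr r (ev (word m p) (c p))) q = cf (Rr r v p) q
      - sV (\<gamma> k) (sV (of_nat (fst p r) * eps) (if q = pH r p then c p else 0)
          + sV (of_nat (snd p r) * of_int (k - 2 * int r)) (if q = pL r p then c p else 0))"
    if p: "p \<in> ?S" for p
  proof -
    have pNM: "fst p \<in> NM m" "snd p \<in> NM m" using p SNM by auto
    have NH: "pH r p \<in> NM m \<times> NM m" and NL: "pL r p \<in> NM m \<times> NM m"
      using pNM r by (auto simp: pH_def pL_def NM_upd)
    have D: "Ds r (word m p) (c p) = sW (of_nat (fst p r) * eps) (ev (word m (pH r p)) (c p))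
       + sW (of_nat (snd p r) * of_int (k - 2 * int r)) (ev (word m (pL r p)) (c p))"
      using Ds_word[OF r, of "fst p" "snd p" "c p"] by (simp add: pH_def pL_def)
    have "Tr r (ev (word m p) (c p)) = Rr r v p - sW (\<gamma> k) (Ds r (word m p) (c p))"
      unfolding Rr_def cv by simp
    then show ?thesis
      unfolding D by (simp add: coeff_diff coeff_add coeff_scale coeff_mon[OF NH] coeff_mon[OF NL])
  qed
  show ?thesis unfolding cv T coeff_sum by (rule sum.cong) (simp_all add: each)
qed

lemma summand_nz: assumes "cf (Rr r v p) q
      - sV (\<gamma> k) (sV (of_nat (fst p r) * eps) (if q = pH r p then cf v p else 0)
          + sV (of_nat (snd p r) * of_int (k - 2 * int r)) (if q = pL r p then cf v p else 0)) \<noteq> 0"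
  shows "cf (Rr r v p) q \<noteq> 0 \<or> (q = pH r p \<and> fst p r \<noteq> 0) \<or> (q = pL r p \<and> snd p r \<noteq> 0)"
  using assms by (auto split: if_splits)

lemma Rr_wt: assumes "r < m" "cf (Rr r v p) q \<noteq> 0"
  shows "int (wp m q) \<le> int (wp m p) - (int m - int r) - 1"
  using Sp_coeff[OF Rr_Sp[OF assms(1)] assms(2)] unfolding wp_def by simp

lemma part1:
  assumes deg: "has_deg \<sigma> \<iota> m v (h, l)" and hnz: "h \<noteq> (\<lambda>_. 0)"
    and r: "r = (LEAST i. h i \<noteq> 0)" and e: "eps \<noteq> 0" and g: "\<gamma> k \<noteq> 0"
  shows "has_deg \<sigma> \<iota> m (Tr r v) (h(r := h r - 1), l)"
proof -
  let ?S = "{p. cf v p \<noteq> 0}"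
  note df = deg_facts[OF deg]
  have hl: "h \<in> NM m" "l \<in> NM m" using df(2,3) by auto
  obtain i where i: "h i \<noteq> 0" using hnz by auto
  have hr0: "h r \<noteq> 0" unfolding r by (rule LeastI[of "\<lambda>i. h i \<noteq> 0", OF i])
  have "r \<le> i" unfolding r by (rule Least_le) (rule i)
  moreover have "i < m"
  proof -
    have "\<forall>j\<ge>m. h j = 0" using hl(1) by (simp add: NM_def)
    then have "\<not> m \<le> i" using i by auto
    then show ?thesis by simp
  qed
  ultimately have rm: "r < m" by simp
  have hr: "1 \<le> h r" using hr0 by simp
  have mr: "int (m - r) = int m - int r" using rm by simp
  define q0 where "q0 = (h(r := h r - 1), l)"
  define W where "W = wp m (h, l)"
  have wq0: "wp m q0 + (m - r) = W"
    unfolding q0_def W_def wp_def using wt_dec[of r m h] rm hr by simp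
  have wS: "wp m p \<le> W" if "p \<in> ?S" for p
    using that df(4)[of p] pairgt_wp unfolding W_def by (cases "p = (h, l)") auto
  have wSeq: "lexgt m l (snd p) \<or> (snd p = l \<and> lexgt m h (fst p))"
    if "p \<in> ?S" "p \<noteq> (h, l)" "wp m p = W" for p
    using pairgt_eq[OF df(4)[of p]] that unfolding W_def by auto
  define G where "G p q = cf (Rr r v p) q
      - sV (\<gamma> k) (sV (of_nat (fst p r) * eps) (if q = pH r p then cf v p else 0)
          + sV (of_nat (snd p r) * of_int (k - 2 * int r)) (if q = pL r p then cf v p else 0))" for p q
  have T: "cf (Tr r v) q = (\<Sum>p\<in>?S. G p q)" for q
    unfolding G_def by (rule Tcoeff[OF rm])
  have G0: "G p q0 = (if p = (h, l) then - sV (\<gamma> k) (sV (of_nat (h r) * eps) (cf v (h, l))) else 0)"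
    if pS: "p \<in> ?S" for p
  proof -
    have R0: "cf (Rr r v p) q0 = 0"
    proof (rule ccontr)
      assume "cf (Rr r v p) q0 \<noteq> 0"
      from Rr_wt[OF rm this] wS[OF pS] wq0 mr show False by linarith
    qed
    have H0: "sV (of_nat (fst p r) * eps) (if q0 = pH r p then cf v p else 0)
        = (if p = (h, l) then sV (of_nat (h r) * eps) (cf v (h, l)) else 0)"
    proof (cases "p = (h, l)")
      case True
      then show ?thesis by (simp add: q0_def pH_def)
    next
      case False
      show ?thesis
      proof (cases "q0 = pH r p \<and> fst p r \<noteq> 0")
        case True
        then have e1: "h(r := h r - 1) = (fst p)(r := fst p r - 1)" "l = snd p"
          by (auto simp: q0_def pH_def)
        have "fst p = h"
        proof
          fix j
          show "fst p j = h j"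
          proof (cases "j = r")
            case True
            have "h r - 1 = fst p r - 1" using fun_cong[OF e1(1), of r] by simp
            moreover have "0 < fst p r" using \<open>q0 = pH r p \<and> fst p r \<noteq> 0\<close> by simp
            ultimately have "fst p r = h r" using hr by linarith
            then show ?thesis using True by simp
          next
            case False
            then show ?thesis using fun_cong[OF e1(1), of j] by simp
          qed
        qed
        then have "p = (h, l)" using e1(2) by (metis prod.collapse)
        then show ?thesis using False by simp
      next
        case False2: False
        then show ?thesis using False by auto
      qed
    qed
    have L0: "sV (of_nat (snd p r) * of_int (k - 2 * int r)) (if q0 = pL r p then cf v p else 0) = 0"
    proof (rule ccontr)
      assume nz: "sV (of_nat (snd p r) * of_int (k - 2 * int r)) (if q0 = pL r p then cf v p else 0) \<noteq> 0"
      then have qe: "q0 = pL r p" and sr: "1 \<le> snd p r" by (auto split: if_splits)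
      then have e1: "fst p = h(r := h r - 1)" "(snd p)(r := snd p r - 1) = l"
        by (auto simp: q0_def pL_def)
      have sl: "snd p = l(r := l r + 1)"
      proof
        fix j
        show "snd p j = (l(r := l r + 1)) j"
          using fun_cong[OF e1(2), of j] sr by (cases "j = r") auto
      qed
      have snr: "snd p r \<noteq> l r" using sl by simp
      then have "p \<noteq> (h, l)" by auto
      moreover have "wp m p = W"
      proof -
        have "wt m (snd p) = wt m l + (m - r)" using wt_dec[of r m "snd p"] rm sr e1(2) by simp
        moreover have "wt m h = wt m (fst p) + (m - r)" using wt_dec[of r m h] rm hr e1(1) by simp
        ultimately show ?thesis unfolding W_def wp_def by simp
      qed
      ultimately have "lexgt m l (snd p) \<or> (snd p = l \<and> lexgt m h (fst p))" using wSeq pS by blast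
      moreover have "\<not> lexgt m l (snd p)" unfolding sl by (rule not_lexgt_inc[OF rm])
      moreover have "snd p \<noteq> l" using snr by auto
      ultimately show False by blast
    qed
    show ?thesis unfolding G_def R0 H0 L0 by simp
  qed
  have val: "cf (Tr r v) q0 = - sV (\<gamma> k) (sV (of_nat (h r) * eps) (cf v (h, l)))"
  proof -
    have "cf (Tr r v) q0 = (\<Sum>p\<in>?S. (if p = (h, l) then - sV (\<gamma> k) (sV (of_nat (h r) * eps) (cf v (h, l))) else 0))"
      unfolding T by (rule sum.cong) (simp_all add: G0)
    also have "\<dots> = - sV (\<gamma> k) (sV (of_nat (h r) * eps) (cf v (h, l)))"
      using df(1,3) by (simp add: sum.delta)
    finally show ?thesis .
  qed
  have nz0: "cf (Tr r v) q0 \<noteq> 0"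
    unfolding val using df(3) e g hr0 by simp
  have others: "pairgt m q0 q" if nz: "cf (Tr r v) q \<noteq> 0" and ne: "q \<noteq> q0" for q
  proof -
    obtain p where pS: "p \<in> ?S" and Gp: "G p q \<noteq> 0"
      using nz unfolding T by (meson sum.not_neutral_contains_not_neutral)
    have cases: "cf (Rr r v p) q \<noteq> 0 \<or> (q = pH r p \<and> fst p r \<noteq> 0) \<or> (q = pL r p \<and> snd p r \<noteq> 0)"
      by (rule summand_nz) (use Gp in \<open>simp add: G_def\<close>)
    have sq0: "snd q0 = l" "fst q0 = h(r := h r - 1)" by (simp_all add: q0_def)
    show ?thesis
    proof -
      { assume "cf (Rr r v p) q \<noteq> 0"
        from Rr_wt[OF rm this] wS[OF pS] wq0 mr have "wp m q < wp m q0" by linarith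
        then have ?thesis by (rule pairgtI1) }
      moreover
      { assume a: "q = pH r p" "fst p r \<noteq> 0"
        have wpq: "wp m p = wp m q + (m - r)"
          using wt_dec[of r m "fst p"] rm a unfolding wp_def pH_def by simp
        have ?thesis
        proof (cases "wp m p < W")
          case True
          then show ?thesis using wpq wq0 by (intro pairgtI1) linarith
        next
          case False
          then have eqW: "wp m p = W" using wS[OF pS] by simp
          then have eqq: "wp m q = wp m q0" using wpq wq0 by linarith
          have "p \<noteq> (h, l)" using ne a by (auto simp: q0_def pH_def)
          then have "lexgt m l (snd p) \<or> (snd p = l \<and> lexgt m h (fst p))" using wSeq pS eqW by blast
          then show ?thesis
          proof
            assume "lexgt m l (snd p)"
            then show ?thesis using eqq a sq0 by (intro pairgtI2) (auto simp: pH_def)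
          next
            assume b: "snd p = l \<and> lexgt m h (fst p)"
            have "lexgt m (h(r := h r - 1)) ((fst p)(r := fst p r - 1))"
              by (rule lexgt_dec2) (use b hr a in auto)
            then show ?thesis using eqq a b sq0 by (intro pairgtI3) (auto simp: pH_def)
          qed
        qed }
      moreover
      { assume a: "q = pL r p" "snd p r \<noteq> 0"
        have wpq: "wp m p = wp m q + (m - r)"
          using wt_dec[of r m "snd p"] rm a unfolding wp_def pL_def by simp
        have ?thesis
        proof (cases "wp m p < W")
          case True
          then show ?thesis using wpq wq0 by (intro pairgtI1) linarith
        next
          case False
          then have eqW: "wp m p = W" using wS[OF pS] by simp
          then have eqq: "wp m q = wp m q0" using wpq wq0 by linarith
          show ?thesis
          proof (cases "p = (h, l)")
            case True
            have "lexgt m l (l(r := l r - 1))" by (rule lexgt_self_dec) (use rm a True in auto)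
            then show ?thesis using eqq a True sq0 by (intro pairgtI2) (auto simp: pL_def)
          next
            case False
            then have "lexgt m l (snd p) \<or> (snd p = l \<and> lexgt m h (fst p))" using wSeq pS eqW by blast
            then show ?thesis
            proof
              assume "lexgt m l (snd p)"
              then have "lexgt m l ((snd p)(r := snd p r - 1))"
                by (rule lexgt_dec_right) (use a rm in auto)
              then show ?thesis using eqq a sq0 by (intro pairgtI2) (auto simp: pL_def)
            next
              assume b: "snd p = l \<and> lexgt m h (fst p)"
              have "lexgt m l (l(r := l r - 1))" by (rule lexgt_self_dec) (use rm a b in auto)
              then show ?thesis using eqq a b sq0 by (intro pairgtI2) (auto simp: pL_def)
            qed
          qed
        qed }
      ultimately show ?thesis using cases by blast
    qed
  qed
  show ?thesis unfolding has_deg_def q0_def[symmetric] using nz0 others by blast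
qed

lemma not_lexgt_zero: "\<not> lexgt m (\<lambda>_. 0) b"
  unfolding lexgt_def by auto

lemma part2:
  assumes deg: "has_deg \<sigma> \<iota> m v ((\<lambda>_. 0), l)" and lnz: "l \<noteq> (\<lambda>_. 0)"
    and s: "s = Max {i. l i \<noteq> 0}"
  shows "cf (Tr s v) ((\<lambda>_. 0), l(s := l s - 1)) = - sV (\<gamma> k) (sV eps (cf v ((\<lambda>_. 0)(s := 1), l(s := l s - 1)))
            + sV (of_nat (l s) * of_int (k - 2 * int s)) (cf v ((\<lambda>_. 0), l)))"
    and "\<And>q. cf (Tr s v) q \<noteq> 0 \<Longrightarrow> q \<noteq> ((\<lambda>_. 0), l(s := l s - 1)) \<Longrightarrow> pairgt m ((\<lambda>_. 0), l(s := l s - 1)) q"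
proof -
  let ?S = "{p. cf v p \<noteq> 0}"
  define h0 :: "nat \<Rightarrow> nat" where "h0 = (\<lambda>_. 0)"
  define q0 where "q0 = (h0, l(s := l s - 1))"
  define p0 where "p0 = (h0, l)"
  define p1 where "p1 = (h0(s := 1), l(s := l s - 1))"
  define \<kappa> where "\<kappa> = (of_nat (l s) * of_int (k - 2 * int s) :: complex)"
  note df = deg_facts[OF deg, folded h0_def p0_def]
  have lNM: "l \<in> NM m" using df(2,3) by (auto simp: p0_def)
  have sub: "{i. l i \<noteq> 0} \<subseteq> {..<m}"
  proof
    fix i assume "i \<in> {i. l i \<noteq> 0}"
    then have "l i \<noteq> 0" by simp
    moreover have "\<forall>i\<ge>m. l i = 0" using lNM by (simp add: NM_def)
    ultimately have "\<not> m \<le> i" by auto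
    then show "i \<in> {..<m}" by simp
  qed
  have fin: "finite {i. l i \<noteq> 0}" using finite_subset[OF sub] by simp
  have sm: "s < m" "l s \<noteq> 0"
  proof -
    obtain i where "l i \<noteq> 0" using lnz by auto
    then have ne: "{i. l i \<noteq> 0} \<noteq> {}" by auto
    have "s \<in> {i. l i \<noteq> 0}" unfolding s using Max_in[OF fin ne] .
    then show "s < m" "l s \<noteq> 0" using sub by auto
  qed
  have ls: "1 \<le> l s" using sm by simp
  have ms: "int (m - s) = int m - int s" using sm by simp
  have wh0: "wt m h0 = 0" by (simp add: wt_def h0_def)
  define W where "W = wp m p0"
  have wq0: "wp m q0 + (m - s) = W"
    unfolding q0_def W_def wp_def p0_def using wt_dec[of s m l] sm ls by simp
  have wS: "wp m p \<le> W" if "p \<in> ?S" for p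
    using that df(4)[of p] pairgt_wp unfolding W_def p0_def by (cases "p = (h0, l)") auto
  have wSeq: "lexgt m l (snd p)" if "p \<in> ?S" "p \<noteq> p0" "wp m p = W" for p
    using pairgt_eq[of m "(h0, l)" p] df(4)[of p] that not_lexgt_zero unfolding W_def p0_def h0_def by auto
  define G where "G p q = cf (Rr s v p) q
      - sV (\<gamma> k) (sV (of_nat (fst p s) * eps) (if q = pH s p then cf v p else 0)
          + sV (of_nat (snd p s) * of_int (k - 2 * int s)) (if q = pL s p then cf v p else 0))" for p q
  have T: "cf (Tr s v) q = (\<Sum>p\<in>?S. G p q)" for q
    unfolding G_def by (rule Tcoeff[OF sm(1)])
  have G0: "G p q0 = - sV (\<gamma> k) ((if p = p1 then sV eps (cf v p1) else 0) + (if p = p0 then sV \<kappa> (cf v p0) else 0))"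
    if pS: "p \<in> ?S" for p
  proof -
    have R0: "cf (Rr s v p) q0 = 0"
    proof (rule ccontr)
      assume "cf (Rr s v p) q0 \<noteq> 0"
      from Rr_wt[OF sm(1) this] wS[OF pS] wq0 ms show False by linarith
    qed
    have H0: "sV (of_nat (fst p s) * eps) (if q0 = pH s p then cf v p else 0)
        = (if p = p1 then sV eps (cf v p1) else 0)"
    proof (cases "p = p1")
      case True
      have "h0(s := 1, s := 0) = h0" by (simp add: h0_def fun_eq_iff)
      then show ?thesis using True by (simp add: q0_def pH_def p1_def)
    next
      case False
      show ?thesis
      proof (cases "q0 = pH s p \<and> fst p s \<noteq> 0")
        case True
        then have e1: "h0 = (fst p)(s := fst p s - 1)" "l(s := l s - 1) = snd p"
          by (auto simp: q0_def pH_def)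
        have "fst p = h0(s := 1)"
        proof
          fix j
          show "fst p j = (h0(s := 1)) j"
          proof (cases "j = s")
            case True
            have "0 = fst p s - 1" using fun_cong[OF e1(1), of s] by (simp add: h0_def)
            moreover have "0 < fst p s" using \<open>q0 = pH s p \<and> fst p s \<noteq> 0\<close> by simp
            ultimately have "fst p s = 1" by linarith
            then show ?thesis using True by simp
          next
            case False
            then show ?thesis using fun_cong[OF e1(1), of j] by simp
          qed
        qed
        then have "p = p1" using e1(2) unfolding p1_def by (metis prod.collapse)
        then show ?thesis using False by simp
      next
        case False2: False
        then show ?thesis using False by auto
      qed
    qed
    have L0: "sV (of_nat (snd p s) * of_int (k - 2 * int s)) (if q0 = pL s p then cf v p else 0)
        = (if p = p0 then sV \<kappa> (cf v p0) else 0)"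
    proof (cases "p = p0")
      case True
      then show ?thesis by (simp add: q0_def pL_def p0_def \<kappa>_def)
    next
      case False
      show ?thesis
      proof (cases "q0 = pL s p \<and> snd p s \<noteq> 0")
        case True
        then have e1: "h0 = fst p" "l(s := l s - 1) = (snd p)(s := snd p s - 1)"
          by (auto simp: q0_def pL_def)
        have "snd p = l"
        proof
          fix j
          show "snd p j = l j"
          proof (cases "j = s")
            case True
            have "l s - 1 = snd p s - 1" using fun_cong[OF e1(2), of s] by simp
            moreover have "0 < snd p s" using \<open>q0 = pL s p \<and> snd p s \<noteq> 0\<close> by simp
            ultimately have "snd p s = l s" using ls by linarith
            then show ?thesis using True by simp
          next
            case False
            then show ?thesis using fun_cong[OF e1(2), of j] by simp
          qed
        qed
        then have "p = p0" using e1(1) unfolding p0_def by (metis prod.collapse)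
        then show ?thesis using False by simp
      next
        case False2: False
        then show ?thesis using False by auto
      qed
    qed
    show ?thesis unfolding G_def R0 H0 L0 by simp
  qed
  have "cf (Tr s v) q0 = (\<Sum>p\<in>?S. - sV (\<gamma> k) ((if p = p1 then sV eps (cf v p1) else 0) + (if p = p0 then sV \<kappa> (cf v p0) else 0)))"
    unfolding T by (rule sum.cong) (simp_all add: G0)
  also have "\<dots> = - sV (\<gamma> k) ((\<Sum>p\<in>?S. (if p = p1 then sV eps (cf v p1) else 0)) + (\<Sum>p\<in>?S. (if p = p0 then sV \<kappa> (cf v p0) else 0)))"
    by (simp add: sum_negf sum_subtractf V.scale_sum_right V.scale_right_distrib sum.distrib)
  also have "\<dots> = - sV (\<gamma> k) (sV eps (cf v p1) + sV \<kappa> (cf v p0))"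
    using df(1,3) by (simp add: sum.delta)
  finally show "cf (Tr s v) ((\<lambda>_. 0), l(s := l s - 1)) = - sV (\<gamma> k) (sV eps (cf v ((\<lambda>_. 0)(s := 1), l(s := l s - 1)))
            + sV (of_nat (l s) * of_int (k - 2 * int s)) (cf v ((\<lambda>_. 0), l)))"
    unfolding q0_def p1_def p0_def \<kappa>_def h0_def .
  show "pairgt m ((\<lambda>_. 0), l(s := l s - 1)) q"
    if nz: "cf (Tr s v) q \<noteq> 0" and ne0: "q \<noteq> ((\<lambda>_. 0), l(s := l s - 1))" for q
  proof -
    have ne: "q \<noteq> q0" using ne0 by (simp add: q0_def h0_def)
    obtain p where pS: "p \<in> ?S" and Gp: "G p q \<noteq> 0"
      using nz unfolding T by (meson sum.not_neutral_contains_not_neutral)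
    have pNM: "fst p \<in> NM m" "snd p \<in> NM m" using pS df(2) by auto
    have cases: "cf (Rr s v p) q \<noteq> 0 \<or> (q = pH s p \<and> fst p s \<noteq> 0) \<or> (q = pL s p \<and> snd p s \<noteq> 0)"
      by (rule summand_nz) (use Gp in \<open>simp add: G_def\<close>)
    have sq0: "snd q0 = l(s := l s - 1)" by (simp add: q0_def)
    have "pairgt m q0 q"
    proof -
      { assume "cf (Rr s v p) q \<noteq> 0"
        from Rr_wt[OF sm(1) this] wS[OF pS] wq0 ms have "wp m q < wp m q0" by linarith
        then have ?thesis by (rule pairgtI1) }
      moreover
      { assume a: "q = pH s p" "fst p s \<noteq> 0"
        have wpq: "wp m p = wp m q + (m - s)"
          using wt_dec[of s m "fst p"] sm a unfolding wp_def pH_def by simp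
        have ?thesis
        proof (cases "wp m p < W")
          case True
          then show ?thesis using wpq wq0 by (intro pairgtI1) linarith
        next
          case False
          then have eqW: "wp m p = W" using wS[OF pS] by simp
          then have eqq: "wp m q = wp m q0" using wpq wq0 by linarith
          have "p \<noteq> p0" using a by (auto simp: p0_def h0_def)
          then have lg: "lexgt m l (snd p)" using wSeq pS eqW by blast
          have wsum: "wt m (fst p) + wt m (snd p) = wt m l"
            using eqW wh0 unfolding W_def wp_def p0_def by simp
          show ?thesis
          proof (cases "snd p = l(s := l s - 1)")
            case True
            have "(fst p)(s := fst p s - 1) = (\<lambda>_. 0)"
              by (rule part2_eq[of "fst p" m s l, OF pNM(1) sm(1) ls]) (use a wsum True in auto)
            then have "q = q0" using a True by (simp add: pH_def q0_def h0_def)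
            then show ?thesis using ne by simp
          next
            case False
            have "lexgt m (l(s := l s - 1)) (snd p)"
              by (rule part2_order[OF lNM pNM(2) pNM(1) s lnz lg _ wsum False]) (use a in simp)
            then show ?thesis using eqq a sq0 by (intro pairgtI2) (auto simp: pH_def)
          qed
        qed }
      moreover
      { assume a: "q = pL s p" "snd p s \<noteq> 0"
        have wpq: "wp m p = wp m q + (m - s)"
          using wt_dec[of s m "snd p"] sm a unfolding wp_def pL_def by simp
        have ?thesis
        proof (cases "wp m p < W")
          case True
          then show ?thesis using wpq wq0 by (intro pairgtI1) linarith
        next
          case False
          then have eqW: "wp m p = W" using wS[OF pS] by simp
          then have eqq: "wp m q = wp m q0" using wpq wq0 by linarith
          have "p \<noteq> p0" using a ne by (auto simp: p0_def pL_def q0_def)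
          then have lg: "lexgt m l (snd p)" using wSeq pS eqW by blast
          have "lexgt m (l(s := l s - 1)) ((snd p)(s := snd p s - 1))"
            by (rule lexgt_dec2[OF lg ls]) (use a in simp)
          then show ?thesis using eqq a sq0 by (intro pairgtI2) (auto simp: pL_def)
        qed }
      ultimately show ?thesis using cases by blast
    qed
    then show ?thesis by (simp add: q0_def h0_def)
  qed
qed

end


lemma Max_nz: assumes "l \<in> NM m" "l \<noteq> (\<lambda>_. 0)" shows "l (Max {i. l i \<noteq> 0}) \<noteq> 0"
proof -
  have sub: "{i. l i \<noteq> 0} \<subseteq> {..<m}"
  proof
    fix i assume "i \<in> {i. l i \<noteq> 0}"
    then have "l i \<noteq> 0" by simp
    moreover have "\<forall>i\<ge>m. l i = 0" using assms(1) by (simp add: NM_def)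
    ultimately have "\<not> m \<le> i" by auto
    then show "i \<in> {..<m}" by simp
  qed
  have fin: "finite {i. l i \<noteq> 0}" using finite_subset[OF sub] by simp
  obtain i where "l i \<noteq> 0" using assms(2) by auto
  then have ne: "{i. l i \<noteq> 0} \<noteq> {}" by auto
  show ?thesis using Max_in[OF fin ne] by simp
qed

theorem lemma3p6:
  fixes m :: nat and k :: int
    and sV :: "complex \<Rightarrow> 'v::ab_group_add \<Rightarrow> 'v" and \<rho> :: "gb \<Rightarrow> 'v \<Rightarrow> 'v"
    and sW :: "complex \<Rightarrow> 'w::ab_group_add \<Rightarrow> 'w" and \<sigma> :: "gb \<Rightarrow> 'w \<Rightarrow> 'w"
    and \<iota> :: "'v \<Rightarrow> 'w"
    and \<alpha> \<beta> :: "int \<Rightarrow> complex"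
    and v :: 'w and h l :: "nat \<Rightarrow> nat"
  assumes m_pos: "m > 0"
    and irr: "irreducible_rep sV (in_Gm0 m) \<rho>"
    and k_odd: "odd k" and k_ge: "k \<ge> int m - 1"
    and vanish: "\<forall>j>0. \<forall>u. \<rho> (Lb (k + j)) u = 0 \<and> \<rho> (Hb (k + j)) u = 0
                         \<and> \<rho> (Ib (k + j)) u = 0 \<and> \<rho> (Jb (k + j)) u = 0"
    and eig: "\<forall>i<m. \<forall>u. \<rho> (Ib (k - int i)) u = sV (\<alpha> (k - int i)) u
                        \<and> \<rho> (Jb (k - int i)) u = sV (\<beta> (k - int i)) u"
    and nondeg: "\<alpha> k * \<beta> k \<noteq> 0"
    and ind: "induced_module m sV \<rho> sW \<sigma> \<iota>"
    and v_notin: "v \<notin> range \<iota>"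
    and deg_v: "has_deg \<sigma> \<iota> m v (h, l)"
  shows "(h \<noteq> (\<lambda>_. 0) \<longrightarrow>
            (let r = (LEAST i. h i \<noteq> 0) in
               has_deg \<sigma> \<iota> m (\<sigma> (Ib (k - int r)) v - sW (\<alpha> (k - int r)) v)
                 (h(r := h r - 1), l)))
       \<and> (h = (\<lambda>_. 0) \<and> l \<noteq> (\<lambda>_. 0) \<longrightarrow>
            (let s = Max {i. l i \<noteq> 0} in
               has_deg \<sigma> \<iota> m (\<sigma> (Ib (k - int s)) v - sW (\<alpha> (k - int s)) v)
                 (\<lambda>_. 0, l(s := l s - 1))
             \<or> has_deg \<sigma> \<iota> m (\<sigma> (Jb (k - int s)) v - sW (\<beta> (k - int s)) v)
                 (\<lambda>_. 0, l(s := l s - 1))))"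
proof -
  have repV: "is_rep sV (in_Gm0 m) \<rho>" using irr unfolding irreducible_rep_def by blast
  have vsV: "vector_space sV" using repV unfolding is_rep_def by blast
  have repW: "is_rep sW in_G0 \<sigma>" using ind unfolding induced_module_def by blast
  have vsW: "vector_space sW" using repW unfolding is_rep_def by blast
  have LSx: "LS m k sV \<rho> sW \<sigma> \<iota>"
    unfolding LS_def using m_pos k_ge vsV vsW ind repW
    unfolding induced_module_def is_rep_def by blast
  interpret LS m k sV \<rho> sW \<sigma> \<iota> by (rule LSx)
  have van: "\<rho> (Ib b) u = 0 \<and> \<rho> (Jb b) u = 0" if "k < b" for b u
  proof -
    have "0 < b - k" using that by simp
    then have "\<rho> (Ib (k + (b - k))) u = 0 \<and> \<rho> (Jb (k + (b - k))) u = 0" using vanish by blast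
    then show ?thesis by simp
  qed
  interpret I: GX m k sV \<rho> sW \<sigma> \<iota> Ib 1 \<alpha>
    by (intro GX.intro LSx GX_axioms.intro) (use van eig in auto)
  interpret J: GX m k sV \<rho> sW \<sigma> \<iota> Jb "-1" \<beta>
    by (intro GX.intro LSx GX_axioms.intro) (use van eig in auto)
  have ak: "\<alpha> k \<noteq> 0" and bk: "\<beta> k \<noteq> 0" using nondeg by auto
  have P1: "h \<noteq> (\<lambda>_. 0) \<longrightarrow>
            (let r = (LEAST i. h i \<noteq> 0) in
               has_deg \<sigma> \<iota> m (\<sigma> (Ib (k - int r)) v - sW (\<alpha> (k - int r)) v)
                 (h(r := h r - 1), l))"
  proof (intro impI)
    assume hnz: "h \<noteq> (\<lambda>_. 0)"
    show "let r = (LEAST i. h i \<noteq> 0) in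
               has_deg \<sigma> \<iota> m (\<sigma> (Ib (k - int r)) v - sW (\<alpha> (k - int r)) v)
                 (h(r := h r - 1), l)"
      unfolding Let_def using I.part1[OF deg_v hnz refl _ ak] unfolding I.Tr_def by simp
  qed
  have P2: "h = (\<lambda>_. 0) \<and> l \<noteq> (\<lambda>_. 0) \<longrightarrow>
            (let s = Max {i. l i \<noteq> 0} in
               has_deg \<sigma> \<iota> m (\<sigma> (Ib (k - int s)) v - sW (\<alpha> (k - int s)) v)
                 (\<lambda>_. 0, l(s := l s - 1))
             \<or> has_deg \<sigma> \<iota> m (\<sigma> (Jb (k - int s)) v - sW (\<beta> (k - int s)) v)
                 (\<lambda>_. 0, l(s := l s - 1)))"
  proof (intro impI)
    assume a: "h = (\<lambda>_. 0) \<and> l \<noteq> (\<lambda>_. 0)"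
    define s where "s = Max {i. l i \<noteq> 0}"
    have deg0: "has_deg \<sigma> \<iota> m v ((\<lambda>_. 0), l)" using deg_v a by simp
    have lNM: "l \<in> NM m" using I.deg_facts(2,3)[OF deg0] by auto
    have c0: "cf v ((\<lambda>_. 0), l) \<noteq> 0" using I.deg_facts(3)[OF deg0] .
    have ls: "l s \<noteq> 0" unfolding s_def by (rule Max_nz[OF lNM]) (use a in simp)
    have ks: "k - 2 * int s \<noteq> 0" using k_odd by auto
    define \<kappa> where "\<kappa> = (of_nat (l s) * of_int (k - 2 * int s) :: complex)"
    have ks': "(of_int (k - 2 * int s) :: complex) \<noteq> 0" using ks by (simp only: of_int_eq_0_iff) simp
    have ls': "(of_nat (l s) :: complex) \<noteq> 0" using ls by simp
    have \<kappa>0: "\<kappa> \<noteq> 0" unfolding \<kappa>_def using ks' ls' by (simp only: mult_eq_0_iff) simp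
    define c1 where "c1 = cf v ((\<lambda>_. 0)(s := 1), l(s := l s - 1))"
    define c0' where "c0' = cf v ((\<lambda>_. 0), l)"
    note I2 = I.part2[OF deg0 conjunct2[OF a] s_def]
    note J2 = J.part2[OF deg0 conjunct2[OF a] s_def]
    have goal: "has_deg \<sigma> \<iota> m (\<sigma> (Ib (k - int s)) v - sW (\<alpha> (k - int s)) v)
                 (\<lambda>_. 0, l(s := l s - 1))
             \<or> has_deg \<sigma> \<iota> m (\<sigma> (Jb (k - int s)) v - sW (\<beta> (k - int s)) v)
                 (\<lambda>_. 0, l(s := l s - 1))"
    proof (cases "c1 + sV \<kappa> c0' = 0")
      case False
      have "cf (I.Tr s v) ((\<lambda>_. 0), l(s := l s - 1)) \<noteq> 0"
        unfolding I2(1) using False ak by (simp add: c1_def c0'_def \<kappa>_def)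
      then have "has_deg \<sigma> \<iota> m (I.Tr s v) ((\<lambda>_. 0), l(s := l s - 1))"
        unfolding has_deg_def using I2(2) by blast
      then show ?thesis unfolding I.Tr_def by simp
    next
      case True
      have "- c1 + sV \<kappa> c0' \<noteq> 0"
      proof
        assume "- c1 + sV \<kappa> c0' = 0"
        then have "(c1 + sV \<kappa> c0') + (- c1 + sV \<kappa> c0') = 0" using True by simp
        moreover have "c1 + sV \<kappa> c0' + (- c1 + sV \<kappa> c0') = sV \<kappa> c0' + sV \<kappa> c0'"
          by (simp add: algebra_simps)
        moreover have "sV \<kappa> c0' + sV \<kappa> c0' = sV (\<kappa> + \<kappa>) c0'"
          by (rule V.scale_left_distrib[symmetric])
        ultimately have z: "sV (\<kappa> + \<kappa>) c0' = 0" by simp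
        have "\<kappa> + \<kappa> \<noteq> 0" using \<kappa>0 by simp
        then show False using z c0 unfolding c0'_def by simp
      qed
      then have "cf (J.Tr s v) ((\<lambda>_. 0), l(s := l s - 1)) \<noteq> 0"
        unfolding J2(1) using bk by (simp add: c1_def c0'_def \<kappa>_def)
      then have "has_deg \<sigma> \<iota> m (J.Tr s v) ((\<lambda>_. 0), l(s := l s - 1))"
        unfolding has_deg_def using J2(2) by blast
      then show ?thesis unfolding J.Tr_def by simp
    qed
    then show "let s = Max {i. l i \<noteq> 0} in
               has_deg \<sigma> \<iota> m (\<sigma> (Ib (k - int s)) v - sW (\<alpha> (k - int s)) v)
                 (\<lambda>_. 0, l(s := l s - 1))
             \<or> has_deg \<sigma> \<iota> m (\<sigma> (Jb (k - int s)) v - sW (\<beta> (k - int s)) v)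
                 (\<lambda>_. 0, l(s := l s - 1))"
      unfolding Let_def s_def .
  qed
  show ?thesis using P1 P2 by blast
qed

end
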